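(* Let $N\ge2$, $\bar\psi>0$ and $h'(0)>0$ be constants. For $\epsilon>0$ set $\lambda(\xi)=\sqrt{\bar\psi^2|\xi|^2+\bar\psi h'(0)-\frac14\epsilon^2}$ and $\lambda_\pm=-\frac12\pm\frac{i}{\epsilon}\lambda$. Let $\theta\in C^\infty(\mathbb{R})$ with $\mathrm{supp}\,\theta\subset[\frac16,3]$ and $\theta=1$ on $[\frac56,\frac{12}5]$. For $k\in\mathbb{Z}$, $t\ge0$, $\tau>0$, $z\in\mathbb{R}^N$ define $$I_{1,k}(t,\tau,z)=\int_{\mathbb{R}^N}e^{i\xi\cdot z}\theta(2^{-k}|\xi|)\frac{e^{-\frac12t}e^{i\tau\lambda}}{\lambda_+-\lambda_-}\,d\xi.$$ Then there is a constant $C>0$ independent of $k$ and $\epsilon$ such that, for $\epsilon$ small enough (possibly depending on $k$), $$|I_{1,k}(t,\tau,z)|\le\epsilon C2^{(N-1)k}\max\{1,2^{-k}\}e^{-\frac12t}\min\Big\{\frac{2^k}{2^k+1},\tau^{-\frac12}\Big\}.$$ *)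

theory Defs
  imports "HOL-Analysis.Analysis"
begin

definition smooth_real :: "(real \<Rightarrow> real) \<Rightarrow> bool" where
  "smooth_real f \<longleftrightarrow> (\<forall>n. \<forall>x. ((deriv ^^ n) f) differentiable (at x))"

text \<open>lambda(xi) = sqrt(psi^2 |xi|^2 + psi h'(0) - eps^2/4); h0 stands for h'(0).\<close>
definition lam :: "real \<Rightarrow> real \<Rightarrow> real \<Rightarrow> 'a::real_normed_vector \<Rightarrow> real" where
  "lam psi h0 eps xi = sqrt (psi\<^sup>2 * (norm xi)\<^sup>2 + psi * h0 - eps\<^sup>2 / 4)"

definition lam_plus :: "real \<Rightarrow> real \<Rightarrow> real \<Rightarrow> 'a::real_normed_vector \<Rightarrow> complex" where
  "lam_plus psi h0 eps xi = - 1/2 + (\<i> / complex_of_real eps) * complex_of_real (lam psi h0 eps xi)"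

definition lam_minus :: "real \<Rightarrow> real \<Rightarrow> real \<Rightarrow> 'a::real_normed_vector \<Rightarrow> complex" where
  "lam_minus psi h0 eps xi = - 1/2 - (\<i> / complex_of_real eps) * complex_of_real (lam psi h0 eps xi)"

definition I1k :: "real \<Rightarrow> real \<Rightarrow> (real \<Rightarrow> real) \<Rightarrow> real \<Rightarrow> int \<Rightarrow> real \<Rightarrow> real
    \<Rightarrow> real ^ 'n \<Rightarrow> complex" where
  "I1k psi h0 \<theta> eps k t tau z =
     integral UNIV (\<lambda>xi::real ^ 'n.
        exp (\<i> * complex_of_real (xi \<bullet> z))
        * complex_of_real (\<theta> (2 powr (- real_of_int k) * norm xi))
        * (complex_of_real (exp (- t / 2)) * exp (\<i> * complex_of_real (tau * lam psi h0 eps xi)))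
        / (lam_plus psi h0 eps xi - lam_minus psi h0 eps xi))"

end

theory Submission
  imports Defs
begin


lemma vdc_ibp:
  fixes \<phi> \<phi>1 \<phi>2 :: "real \<Rightarrow> real"
  assumes uv: "u \<le> v" and dpos: "\<delta> > 0"
    and d1: "\<And>s. s \<in> {u..v} \<Longrightarrow> (\<phi> has_real_derivative \<phi>1 s) (at s)"
    and d2: "\<And>s. s \<in> {u..v} \<Longrightarrow> (\<phi>1 has_real_derivative \<phi>2 s) (at s)"
    and big: "\<And>s. s \<in> {u..v} \<Longrightarrow> \<delta> \<le> \<bar>\<phi>1 s\<bar>"
    and pos: "\<And>s. s \<in> {u..v} \<Longrightarrow> 0 \<le> \<phi>2 s"
  shows "norm (integral {u..v} (\<lambda>s. exp (\<i> * of_real (\<phi> s)))) \<le> 4/\<delta>"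
proof -
  define E where "E = (\<lambda>s. exp (\<i> * complex_of_real (\<phi> s)))"
  define q where "q s = \<phi>2 s / (\<phi>1 s)^2" for s
  define H where "H s = -\<i> * (E s * complex_of_real (1 / \<phi>1 s))" for s
  have nz: "\<phi>1 s \<noteq> 0" if "s \<in> {u..v}" for s using big[OF that] dpos by auto
  have Ed: "(E has_vector_derivative (\<i> * of_real (\<phi>1 s)) * E s) (at s)" if "s \<in> {u..v}" for s
  proof -
    have "((\<lambda>s. \<i> * complex_of_real (\<phi> s)) has_vector_derivative \<i> * of_real (\<phi>1 s)) (at s)"
      by (intro has_vector_derivative_mult_right has_vector_derivative_of_real d1 that)
    from field_vector_diff_chain_at[OF this DERIV_exp]
    show ?thesis by (simp add: E_def o_def)
  qed
  have Rd: "((\<lambda>s. 1 / \<phi>1 s) has_real_derivative - q s) (at s)" if "s \<in> {u..v}" for s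
    using DERIV_inverse_fun[OF d2[OF that] nz[OF that]] nz[OF that]
    by (simp add: q_def divide_inverse power2_eq_square)
  have Hd: "(H has_vector_derivative (E s + \<i> * (E s * of_real (q s)))) (at s)" if s: "s \<in> {u..v}" for s
  proof -
    have "(H has_vector_derivative (-\<i> * (E s * of_real (- q s) + (\<i> * of_real (\<phi>1 s) * E s) * of_real (1 / \<phi>1 s)))) (at s)"
      unfolding H_def
      by (intro has_vector_derivative_mult_right has_vector_derivative_mult Ed has_vector_derivative_of_real Rd s)
    moreover have "-\<i> * (E s * of_real (- q s) + (\<i> * of_real (\<phi>1 s) * E s) * of_real (1 / \<phi>1 s))
        = E s + \<i> * (E s * of_real (q s))"
      using nz[OF s] by (simp add: field_simps)
    ultimately show ?thesis by simp
  qed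
  have Hint: "((\<lambda>s. E s + \<i> * (E s * of_real (q s))) has_integral H v - H u) {u..v}"
    using uv Hd by (intro fundamental_theorem_of_calculus) (auto intro: has_vector_derivative_at_within)
  have Rd2: "((\<lambda>s. - (1 / \<phi>1 s)) has_vector_derivative q s) (at s within {u..v})" if "s \<in> {u..v}" for s
    using DERIV_minus[OF Rd[OF that]] by (simp add: has_real_derivative_iff_has_vector_derivative[symmetric] has_field_derivative_at_within)
  have qint: "(q has_integral (- (1 / \<phi>1 v)) - (- (1 / \<phi>1 u))) {u..v}"
    using uv Rd2 by (intro fundamental_theorem_of_calculus[where f="\<lambda>s. - (1 / \<phi>1 s)"]) auto
  have Econt: "continuous_on {u..v} E"
    using Ed by (intro continuous_on_vector_derivative) (auto intro: has_vector_derivative_at_within)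
  have Eint: "E integrable_on {u..v}" using Econt integrable_continuous_interval by blast
  have EqI: "(\<lambda>s. E s * of_real (q s)) integrable_on {u..v}"
  proof -
    have "(\<lambda>s. -\<i> * ((E s + \<i> * (E s * of_real (q s))) - E s)) integrable_on {u..v}"
      using Hint Eint by (intro integrable_on_mult_right integrable_diff) auto
    then show ?thesis by (simp add: algebra_simps)
  qed
  have eq: "integral {u..v} E = (H v - H u) - \<i> * integral {u..v} (\<lambda>s. E s * of_real (q s))"
  proof -
    have "integral {u..v} (\<lambda>s. E s + \<i> * (E s * of_real (q s))) = integral {u..v} E + \<i> * integral {u..v} (\<lambda>s. E s * of_real (q s))"
      using Eint EqI by (simp add: integral_add integrable_on_mult_right)
    then show ?thesis using integral_unique[OF Hint] by (simp add: algebra_simps)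
  qed
  have nE: "norm (E s) = 1" for s by (simp add: E_def)
  have nH: "norm (H s) \<le> 1/\<delta>" if "s \<in> {u..v}" for s
  proof -
    have "norm (H s) = 1 / \<bar>\<phi>1 s\<bar>" by (simp add: H_def norm_mult nE norm_divide)
    also have "\<dots> \<le> 1/\<delta>" using big[OF that] dpos by (simp add: frac_le)
    finally show ?thesis .
  qed
  have qnn: "0 \<le> q s" if "s \<in> {u..v}" for s using pos[OF that] by (simp add: q_def)
  have qb: "norm (integral {u..v} (\<lambda>s. E s * of_real (q s))) \<le> integral {u..v} q"
    apply (rule integral_norm_bound_integral[OF EqI])
    using qint apply blast
    using qnn by (simp add: norm_mult nE abs_of_nonneg)
  have "integral {u..v} q = 1 / \<phi>1 u - 1 / \<phi>1 v" using integral_unique[OF qint] by simp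
  also have "\<dots> \<le> 2/\<delta>"
  proof -
    have "\<bar>1 / \<phi>1 u\<bar> \<le> 1/\<delta>" "\<bar>1 / \<phi>1 v\<bar> \<le> 1/\<delta>"
      using big[of u] big[of v] uv dpos by (auto simp: frac_le)
    then show ?thesis by linarith
  qed
  finally have qb2: "integral {u..v} q \<le> 2/\<delta>" .
  have "norm (integral {u..v} E) \<le> norm (H v - H u) + norm (\<i> * integral {u..v} (\<lambda>s. E s * of_real (q s)))"
    unfolding eq by (rule norm_triangle_ineq4)
  also have "\<dots> \<le> norm (H v) + norm (H u) + norm (integral {u..v} (\<lambda>s. E s * of_real (q s)))"
    using norm_triangle_ineq4[of "H v" "H u"] by (simp add: norm_mult)
  also have "\<dots> \<le> 1/\<delta> + 1/\<delta> + 2/\<delta>" using nH[of u] nH[of v] uv qb qb2 by (intro add_mono) auto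
  finally show ?thesis by (simp add: E_def)
qed


lemma deriv_lower:
  fixes f f' :: "real \<Rightarrow> real"
  assumes "w \<le> s" "\<And>x. x \<in> {w..s} \<Longrightarrow> (f has_real_derivative f' x) (at x)"
    "\<And>x. x \<in> {w..s} \<Longrightarrow> \<mu> \<le> f' x"
  shows "f w + \<mu> * (s - w) \<le> f s"
proof (cases "w = s")
  case True then show ?thesis by simp
next
  case False
  then have "w < s" using assms(1) by simp
  from MVT2[OF this, of f f'] assms(2)
  obtain z where z: "w < z" "z < s" "f s - f w = (s - w) * f' z" by auto
  have "\<mu> * (s - w) \<le> f' z * (s - w)" using assms(3)[of z] z \<open>w < s\<close> by (intro mult_right_mono) auto
  then show ?thesis using z by (simp add: algebra_simps)
qed

lemma vdc2:
  fixes \<phi> \<phi>1 \<phi>2 :: "real \<Rightarrow> real"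
  assumes uv: "u \<le> v" and mpos: "\<mu> > 0"
    and d1: "\<And>s. s \<in> {u..v} \<Longrightarrow> (\<phi> has_real_derivative \<phi>1 s) (at s)"
    and d2: "\<And>s. s \<in> {u..v} \<Longrightarrow> (\<phi>1 has_real_derivative \<phi>2 s) (at s)"
    and conv: "\<And>s. s \<in> {u..v} \<Longrightarrow> \<mu> \<le> \<phi>2 s"
  shows "norm (integral {u..v} (\<lambda>s. exp (\<i> * of_real (\<phi> s)))) \<le> 10 / sqrt \<mu>"
proof -
  define \<delta> where "\<delta> = sqrt \<mu>"
  define d where "d = 1 / \<delta>"
  have dpos: "\<delta> > 0" using mpos by (simp add: \<delta>_def)
  have md: "\<mu> * d = \<delta>" using mpos by (simp add: d_def \<delta>_def field_simps real_sqrt_mult[symmetric])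
  have d0: "d > 0" using dpos by (simp add: d_def)
  define E where "E = (\<lambda>s. exp (\<i> * complex_of_real (\<phi> s)))"
  have Econt: "continuous_on {a..b} E" if "u \<le> a" "b \<le> v" for a b
  proof -
    have "continuous_on {a..b} \<phi>"
      using that by (intro continuous_at_imp_continuous_on) (auto intro!: DERIV_isCont d1)
    then show ?thesis unfolding E_def by (intro continuous_intros)
  qed
  have Eint: "E integrable_on {a..b}" if "u \<le> a" "b \<le> v" for a b
    using Econt[OF that] integrable_continuous_interval by blast
  have c1: "continuous_on {u..v} \<phi>1"
    by (intro continuous_at_imp_continuous_on) (auto intro!: DERIV_isCont d2)
  obtain w where w: "w \<in> {u..v}" "w = u \<or> \<phi>1 w \<le> 0" "w = v \<or> 0 \<le> \<phi>1 w"
  proof (cases "0 \<le> \<phi>1 u")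
    case True then show ?thesis using that[of u] uv by auto
  next
    case F1: False
    show ?thesis
    proof (cases "\<phi>1 v \<le> 0")
      case True then show ?thesis using that[of v] uv by auto
    next
      case False
      from IVT'[of \<phi>1 u 0 v, OF _ _ uv c1] F1 False
      obtain x where "u \<le> x" "x \<le> v" "\<phi>1 x = 0" by auto
      then show ?thesis using that[of x] by auto
    qed
  qed
  have incr: "\<phi>1 a + \<mu> * (b - a) \<le> \<phi>1 b" if "u \<le> a" "a \<le> b" "b \<le> v" for a b
    using that by (intro deriv_lower[where f'=\<phi>2]) (auto intro: d2 conv)
  define a1 where "a1 = max u (w - d)"
  define a2 where "a2 = min v (w + d)"
  have ord: "u \<le> a1" "a1 \<le> a2" "a2 \<le> v" using w d0 by (auto simp: a1_def a2_def)
  have left: "norm (integral {u..a1} E) \<le> 4/\<delta>"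
  proof (cases "a1 = u")
    case True then show ?thesis using dpos by simp
  next
    case False
    then have a1: "a1 = w - d" "w \<noteq> u" using d0 by (auto simp: a1_def)
    then have pw: "\<phi>1 w \<le> 0" using w by auto
    show ?thesis unfolding E_def
    proof (rule vdc_ibp[OF ord(1) dpos])
      fix s assume s: "s \<in> {u..a1}"
      then show "(\<phi> has_real_derivative \<phi>1 s) (at s)" "(\<phi>1 has_real_derivative \<phi>2 s) (at s)"
        using ord d1 d2 by auto
      show "0 \<le> \<phi>2 s" using conv[of s] s ord mpos by auto
      have "\<phi>1 s + \<mu> * (w - s) \<le> \<phi>1 w" using s ord w a1 d0 by (intro incr) auto
      moreover have "\<mu> * d \<le> \<mu> * (w - s)" using s a1 mpos by (intro mult_left_mono) auto
      ultimately show "\<delta> \<le> \<bar>\<phi>1 s\<bar>" using pw md by linarith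
    qed
  qed
  have right: "norm (integral {a2..v} E) \<le> 4/\<delta>"
  proof (cases "a2 = v")
    case True then show ?thesis using dpos by simp
  next
    case False
    then have a2: "a2 = w + d" "w \<noteq> v" using d0 by (auto simp: a2_def)
    then have pw: "0 \<le> \<phi>1 w" using w by auto
    show ?thesis unfolding E_def
    proof (rule vdc_ibp[OF ord(3) dpos])
      fix s assume s: "s \<in> {a2..v}"
      then show "(\<phi> has_real_derivative \<phi>1 s) (at s)" "(\<phi>1 has_real_derivative \<phi>2 s) (at s)"
        using ord d1 d2 by auto
      show "0 \<le> \<phi>2 s" using conv[of s] s ord mpos by auto
      have "\<phi>1 w + \<mu> * (s - w) \<le> \<phi>1 s" using s ord w a2 d0 by (intro incr) auto
      moreover have "\<mu> * d \<le> \<mu> * (s - w)" using s a2 mpos by (intro mult_left_mono) auto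
      ultimately show "\<delta> \<le> \<bar>\<phi>1 s\<bar>" using pw md by linarith
    qed
  qed
  have mid: "norm (integral {a1..a2} E) \<le> 2 * d"
  proof -
    have "norm (integral {a1..a2} E) \<le> integral {a1..a2} (\<lambda>_. 1::real)"
      using ord by (intro integral_norm_bound_integral Eint) (auto simp: E_def)
    also have "\<dots> = a2 - a1" using ord by simp
    also have "\<dots> \<le> 2 * d" by (auto simp: a1_def a2_def)
    finally show ?thesis .
  qed
  have "integral {u..v} E = integral {u..a1} E + integral {a1..a2} E + integral {a2..v} E"
  proof -
    have "integral {u..a2} E + integral {a2..v} E = integral {u..v} E"
      by (rule Henstock_Kurzweil_Integration.integral_combine) (use ord Eint in auto)
    moreover have "integral {u..a1} E + integral {a1..a2} E = integral {u..a2} E"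
      by (rule Henstock_Kurzweil_Integration.integral_combine) (use ord Eint in auto)
    ultimately show ?thesis by simp
  qed
  then have "norm (integral {u..v} E) \<le> norm (integral {u..a1} E) + norm (integral {a1..a2} E) + norm (integral {a2..v} E)"
    using norm_triangle_ineq[of "integral {u..a1} E + integral {a1..a2} E" "integral {a2..v} E"]
      norm_triangle_ineq[of "integral {u..a1} E" "integral {a1..a2} E"] by simp
  also have "\<dots> \<le> 4/\<delta> + 2 * d + 4/\<delta>" using left mid right by linarith
  also have "\<dots> = 10 / sqrt \<mu>" by (simp add: d_def \<delta>_def)
  finally show ?thesis by (simp add: E_def)
qed


lemma abel_bound:
  fixes e :: "real \<Rightarrow> complex" and g g' :: "real \<Rightarrow> real"
  assumes ab: "a \<le> b" and ec: "continuous_on {a..b} e"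
    and gd: "\<And>s. s \<in> {a..b} \<Longrightarrow> (g has_real_derivative g' s) (at s)"
    and g'c: "continuous_on {a..b} g'"
    and Fb: "\<And>u. u \<in> {a..b} \<Longrightarrow> norm (integral {a..u} e) \<le> B"
    and g'b: "\<And>s. s \<in> {a..b} \<Longrightarrow> \<bar>g' s\<bar> \<le> G"
    and gb: "\<bar>g b\<bar> \<le> M"
  shows "norm (integral {a..b} (\<lambda>s. e s * of_real (g s))) \<le> B * (M + (b - a) * G)"
proof -
  define F where "F = (\<lambda>u. integral {a..u} e)"
  have Fd: "(F has_vector_derivative e u) (at u within {a..b})" if "u \<in> {a..b}" for u
    unfolding F_def using integral_has_vector_derivative[OF ec that] .
  have gd': "((\<lambda>s. complex_of_real (g s)) has_vector_derivative of_real (g' s)) (at s within {a..b})" if "s \<in> {a..b}" for s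
    using has_vector_derivative_of_real[OF has_field_derivative_at_within[OF gd[OF that]]] .
  have Pd: "((\<lambda>u. F u * of_real (g u)) has_vector_derivative (F u * of_real (g' u) + e u * of_real (g u))) (at u within {a..b})"
    if "u \<in> {a..b}" for u
    using has_vector_derivative_mult[OF Fd[OF that] gd'[OF that]] .
  have Pint: "((\<lambda>u. F u * of_real (g' u) + e u * of_real (g u)) has_integral F b * of_real (g b) - F a * of_real (g a)) {a..b}"
    using ab Pd by (intro fundamental_theorem_of_calculus) auto
  have Fc: "continuous_on {a..b} F"
    using Fd by (intro continuous_on_vector_derivative) auto
  have gc: "continuous_on {a..b} g"
    by (intro continuous_at_imp_continuous_on) (auto intro!: DERIV_isCont gd)
  have I1: "(\<lambda>u. F u * of_real (g' u)) integrable_on {a..b}"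
    by (intro integrable_continuous_interval continuous_intros Fc g'c)
  have I2: "(\<lambda>u. e u * of_real (g u)) integrable_on {a..b}"
    by (intro integrable_continuous_interval continuous_intros ec gc)
  have Fa: "F a = 0" by (simp add: F_def)
  have eq: "integral {a..b} (\<lambda>s. e s * of_real (g s)) = F b * of_real (g b) - integral {a..b} (\<lambda>u. F u * of_real (g' u))"
    using integral_unique[OF Pint] integral_add[OF I1 I2] Fa by (simp add: algebra_simps)
  have B0: "0 \<le> B" using Fb[of a] ab by simp
  have "norm (integral {a..b} (\<lambda>u. F u * of_real (g' u))) \<le> integral {a..b} (\<lambda>_. B * G)"
  proof (rule integral_norm_bound_integral[OF I1])
    show "(\<lambda>_. B * G) integrable_on {a..b}" by (rule integrable_const_ivl)
    fix x assume x: "x \<in> {a..b}"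
    have "norm (F x * of_real (g' x)) = norm (F x) * \<bar>g' x\<bar>" by (simp add: norm_mult)
    also have "\<dots> \<le> B * G" using Fb[OF x] g'b[OF x] B0 by (intro mult_mono) (auto simp: F_def)
    finally show "norm (F x * of_real (g' x)) \<le> B * G" .
  qed
  also have "\<dots> = B * G * (b - a)" using ab by simp
  finally have n1: "norm (integral {a..b} (\<lambda>u. F u * of_real (g' u))) \<le> B * G * (b - a)" .
  have n2: "norm (F b * of_real (g b)) \<le> B * M"
    using Fb[of b] ab gb B0 by (simp add: norm_mult F_def mult_mono)
  have "norm (integral {a..b} (\<lambda>s. e s * of_real (g s))) \<le> norm (F b * of_real (g b)) + norm (integral {a..b} (\<lambda>u. F u * of_real (g' u)))"
    unfolding eq by (rule norm_triangle_ineq4)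
  also have "\<dots> \<le> B * M + B * G * (b - a)" using n1 n2 by linarith
  finally show ?thesis by (simp add: algebra_simps)
qed


lemma Lam_deriv:
  fixes psi K :: real
  assumes "K > 0"
  shows "((\<lambda>y. sqrt (psi\<^sup>2 * y\<^sup>2 + K)) has_real_derivative psi\<^sup>2 * y / sqrt (psi\<^sup>2 * y\<^sup>2 + K)) (at y)"
proof -
  have pos: "psi\<^sup>2 * y\<^sup>2 + K > 0" using assms by (simp add: add_nonneg_pos)
  have d: "((\<lambda>y. psi\<^sup>2 * y\<^sup>2 + K) has_real_derivative psi\<^sup>2 * (2 * y)) (at y)"
    by (auto intro!: derivative_eq_intros)
  have "((\<lambda>y. sqrt (psi\<^sup>2 * y\<^sup>2 + K)) has_real_derivative inverse (sqrt (psi\<^sup>2 * y\<^sup>2 + K)) / 2 * (psi\<^sup>2 * (2 * y))) (at y)"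
    using DERIV_chain2[OF DERIV_real_sqrt[OF pos] d] .
  moreover have "inverse (sqrt (psi\<^sup>2 * y\<^sup>2 + K)) / 2 * (psi\<^sup>2 * (2 * y)) = psi\<^sup>2 * y / sqrt (psi\<^sup>2 * y\<^sup>2 + K)"
    by (simp add: field_simps)
  ultimately show ?thesis by simp
qed

lemma ratio_deriv:
  fixes psi K :: real
  assumes "K > 0"
  shows "((\<lambda>y. y / sqrt (psi\<^sup>2 * y\<^sup>2 + K)) has_real_derivative K / (sqrt (psi\<^sup>2 * y\<^sup>2 + K))^3) (at y)"
proof -
  have pos: "psi\<^sup>2 * y\<^sup>2 + K > 0" using assms by (simp add: add_nonneg_pos)
  define S where "S = sqrt (psi\<^sup>2 * y\<^sup>2 + K)"
  have S0: "S > 0" using pos by (simp add: S_def)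
  have SS: "S^2 = psi\<^sup>2 * y\<^sup>2 + K" using pos by (simp add: S_def)
  have "((\<lambda>y. y / sqrt (psi\<^sup>2 * y\<^sup>2 + K)) has_real_derivative (1 * S - y * (psi\<^sup>2 * y / S)) / (S * S)) (at y)"
    using DERIV_divide[OF DERIV_ident Lam_deriv[OF assms, where psi=psi and y=y]] S0 by (simp add: S_def)
  moreover have "(1 * S - y * (psi\<^sup>2 * y / S)) / (S * S) = K / S^3"
    using S0 SS by (simp add: field_simps power2_eq_square power3_eq_cube)
  ultimately have "((\<lambda>y. y / sqrt (psi\<^sup>2 * y\<^sup>2 + K)) has_real_derivative K / S^3) (at y)" by simp
  then show ?thesis unfolding S_def .
qed


lemma line_bound:
  fixes \<theta> \<theta>' :: "real \<Rightarrow> real"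
  assumes psi: "\<psi> > 0" and m2: "m2 > 0" and tau: "\<tau> > 0" and rho: "\<rho> > 0"
    and D: "0 \<le> D" "D \<le> \<rho>" and q: "q > 0"
    and thd: "\<And>x. (\<theta> has_real_derivative \<theta>' x) (at x)"
    and th'c: "continuous_on UNIV \<theta>'"
    and Mb: "\<And>x. \<bar>\<theta> x\<bar> \<le> M" and M1b: "\<And>x. \<bar>\<theta>' x\<bar> \<le> M1"
    and L: "L > 0"
    and Lb: "\<And>y. \<theta> (q * sqrt (y\<^sup>2 + \<rho>)) \<noteq> 0 \<or> \<theta>' (q * sqrt (y\<^sup>2 + \<rho>)) \<noteq> 0
               \<Longrightarrow> L \<le> sqrt (\<psi>\<^sup>2 * (y\<^sup>2 + \<rho>) + m2)"
    and Ub: "\<And>y. y\<^sup>2 \<le> D \<Longrightarrow> sqrt (\<psi>\<^sup>2 * (y\<^sup>2 + \<rho>) + m2) \<le> U"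
  shows "norm (integral {-sqrt D..sqrt D} (\<lambda>y. exp (\<i> * of_real (\<tau> * sqrt (\<psi>\<^sup>2 * (y\<^sup>2 + \<rho>) + m2) + c * y))
            * of_real (\<theta> (q * sqrt (y\<^sup>2 + \<rho>)) / sqrt (\<psi>\<^sup>2 * (y\<^sup>2 + \<rho>) + m2))))
         \<le> 10 / sqrt (\<tau> * \<psi>\<^sup>2 / (2 * U)) * (M / L + 2 * sqrt D * (M1 * q / L + M * \<psi> / L\<^sup>2))"
proof -
  define K where "K = \<psi>\<^sup>2 * \<rho> + m2"
  have K0: "K > 0" using m2 psi rho by (simp add: K_def add_nonneg_pos)
  define \<Lambda> where "\<Lambda> = (\<lambda>y. sqrt (\<psi>\<^sup>2 * y\<^sup>2 + K))"
  have \<Lambda>eq: "sqrt (\<psi>\<^sup>2 * (y\<^sup>2 + \<rho>) + m2) = \<Lambda> y" for y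
    by (simp add: \<Lambda>_def K_def algebra_simps)
  have \<Lambda>sq: "(\<Lambda> y)\<^sup>2 = \<psi>\<^sup>2 * y\<^sup>2 + K" for y
    unfolding \<Lambda>_def by (simp add: add_nonneg_pos K0 less_imp_le add_nonneg_nonneg)
  have \<Lambda>0: "\<Lambda> y > 0" for y unfolding \<Lambda>_def using K0 by (simp add: add_nonneg_pos)
  have \<Lambda>y: "\<psi> * \<bar>y\<bar> \<le> \<Lambda> y" for y
  proof -
    have "(\<psi> * \<bar>y\<bar>)\<^sup>2 \<le> (\<Lambda> y)\<^sup>2" using \<Lambda>sq K0 by (simp add: power_mult_distrib)
    then show ?thesis using \<Lambda>0[of y] by (meson abs_ge_zero less_imp_le power2_le_imp_le)
  qed
  define r where "r = (\<lambda>y. sqrt (y\<^sup>2 + \<rho>))"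
  have r0: "r y > 0" for y unfolding r_def using rho by (simp add: add_nonneg_pos)
  have ry: "\<bar>y\<bar> \<le> r y" for y
  proof -
    have "sqrt (y\<^sup>2) \<le> sqrt (y\<^sup>2 + \<rho>)" using rho by (intro real_sqrt_le_mono) simp
    then show ?thesis by (simp add: r_def)
  qed
  have rd: "(r has_real_derivative y / r y) (at y)" for y
    using Lam_deriv[OF rho, where psi=1 and y=y] by (simp add: r_def)
  define U' where "U' = U"
  define \<mu> where "\<mu> = \<tau> * \<psi>\<^sup>2 / (2 * U)"
  have U0: "U > 0" using Ub[of 0] \<Lambda>0[of 0] \<Lambda>eq[of 0] D by simp
  have mu0: "\<mu> > 0" using U0 tau psi by (simp add: \<mu>_def)
  define \<phi> where "\<phi> = (\<lambda>y. \<tau> * \<Lambda> y + c * y)"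
  define \<phi>1 where "\<phi>1 = (\<lambda>y. \<tau> * (\<psi>\<^sup>2 * y / \<Lambda> y) + c)"
  define \<phi>2 where "\<phi>2 = (\<lambda>y. \<tau> * (\<psi>\<^sup>2 * (K / (\<Lambda> y)^3)))"
  have d1: "(\<phi> has_real_derivative \<phi>1 y) (at y)" for y
  proof -
    have "((\<lambda>y. \<tau> * \<Lambda> y + c * y) has_real_derivative \<tau> * (\<psi>\<^sup>2 * y / \<Lambda> y) + c * 1) (at y)"
      using Lam_deriv[OF K0, where psi=\<psi> and y=y] unfolding \<Lambda>_def
      by (intro DERIV_add DERIV_cmult DERIV_ident) auto
    then show ?thesis by (simp add: \<phi>_def \<phi>1_def)
  qed
  have d2: "(\<phi>1 has_real_derivative \<phi>2 y) (at y)" for y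
  proof -
    have "((\<lambda>y. y / \<Lambda> y) has_real_derivative K / (\<Lambda> y)^3) (at y)"
      using ratio_deriv[OF K0, where psi=\<psi> and y=y] unfolding \<Lambda>_def .
    then have "((\<lambda>y. \<tau> * (\<psi>\<^sup>2 * (y / \<Lambda> y)) + c) has_real_derivative \<tau> * (\<psi>\<^sup>2 * (K / (\<Lambda> y)^3)) + 0) (at y)"
      by (intro DERIV_add DERIV_cmult DERIV_const)
    then show ?thesis by (simp add: \<phi>1_def \<phi>2_def)
  qed
  have conv: "\<mu> \<le> \<phi>2 y" if "y \<in> {-sqrt D..sqrt D}" for y
  proof -
    have "y\<^sup>2 \<le> D" using that D real_sqrt_le_iff
      by (metis abs_le_iff atLeastAtMost_iff minus_le_iff real_sqrt_abs real_sqrt_le_mono abs_le_square_iff real_sqrt_pow2)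
    then have y2: "\<psi>\<^sup>2 * y\<^sup>2 \<le> K" using D psi m2 unfolding K_def
      by (smt (verit) mult_left_mono zero_le_power2)
    have LU: "\<Lambda> y \<le> U" using Ub[OF \<open>y\<^sup>2 \<le> D\<close>] by (simp add: \<Lambda>eq)
    have "(\<Lambda> y)\<^sup>2 \<le> 2 * K" using \<Lambda>sq y2 by simp
    have "1 / (2 * U) \<le> 1 / (2 * \<Lambda> y)" using LU \<Lambda>0[of y] by (simp add: frac_le)
    also have "\<dots> = ((\<Lambda> y)\<^sup>2 / 2) / (\<Lambda> y)^3" using \<Lambda>0[of y] by (simp add: power2_eq_square power3_eq_cube)
    also have "\<dots> \<le> K / (\<Lambda> y)^3" using \<open>(\<Lambda> y)\<^sup>2 \<le> 2 * K\<close> \<Lambda>0[of y] by (intro divide_right_mono) auto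
    finally have "1 / (2 * U) \<le> K / (\<Lambda> y)^3" .
    then have "\<tau> * \<psi>\<^sup>2 * (1 / (2 * U)) \<le> \<tau> * \<psi>\<^sup>2 * (K / (\<Lambda> y)^3)" using tau psi by (intro mult_left_mono) auto
    then show ?thesis by (simp add: \<mu>_def \<phi>2_def)
  qed
  define e where "e = (\<lambda>y. exp (\<i> * complex_of_real (\<phi> y)))"
  have \<phi>c: "continuous_on UNIV \<phi>" using d1 by (intro continuous_at_imp_continuous_on) (auto intro: DERIV_isCont)
  have ec: "continuous_on S e" for S unfolding e_def
    by (intro continuous_intros continuous_on_subset[OF \<phi>c]) auto
  have Fb: "norm (integral {-sqrt D..u} e) \<le> 10 / sqrt \<mu>" if "u \<in> {-sqrt D..sqrt D}" for u
    unfolding e_def using that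
    by (intro vdc2[OF _ mu0 d1 d2 conv]) auto
  define g where "g = (\<lambda>y. \<theta> (q * r y) / \<Lambda> y)"
  define g' where "g' = (\<lambda>y. \<theta>' (q * r y) * (q * (y / r y)) / \<Lambda> y - \<theta> (q * r y) * (\<psi>\<^sup>2 * y / \<Lambda> y) / (\<Lambda> y)\<^sup>2)"
  have gd: "(g has_real_derivative g' y) (at y)" for y
  proof -
    have a: "((\<lambda>y. \<theta> (q * r y)) has_real_derivative \<theta>' (q * r y) * (q * (y / r y))) (at y)"
      using DERIV_chain2[OF thd DERIV_cmult[OF rd, of q]] .
    have b: "(\<Lambda> has_real_derivative \<psi>\<^sup>2 * y / \<Lambda> y) (at y)"
      using Lam_deriv[OF K0, where psi=\<psi> and y=y] unfolding \<Lambda>_def .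
    have "(g has_real_derivative (\<theta>' (q * r y) * (q * (y / r y)) * \<Lambda> y - \<theta> (q * r y) * (\<psi>\<^sup>2 * y / \<Lambda> y)) / (\<Lambda> y * \<Lambda> y)) (at y)"
      unfolding g_def using DERIV_divide[OF a b] \<Lambda>0[of y] by simp
    moreover have "(\<theta>' (q * r y) * (q * (y / r y)) * \<Lambda> y - \<theta> (q * r y) * (\<psi>\<^sup>2 * y / \<Lambda> y)) / (\<Lambda> y * \<Lambda> y) = g' y"
      using \<Lambda>0[of y] by (simp add: g'_def diff_divide_distrib power2_eq_square)
    ultimately show ?thesis by simp
  qed
  have th_c: "continuous_on UNIV \<theta>" using thd by (intro continuous_at_imp_continuous_on) (auto intro: DERIV_isCont)
  have rc: "continuous_on UNIV r" unfolding r_def by (intro continuous_intros)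
  have \<Lambda>c: "continuous_on UNIV \<Lambda>" unfolding \<Lambda>_def by (intro continuous_intros)
  have rnz: "r y \<noteq> 0" for y using r0[of y] by simp
  have \<Lambda>nz: "\<Lambda> y \<noteq> 0" for y using \<Lambda>0[of y] by simp
  have g'c: "continuous_on S g'" for S
  proof -
    have c1: "continuous_on S (\<lambda>y. \<theta>' (q * r y))"
      by (rule continuous_on_compose2[OF th'c continuous_on_mult[OF continuous_on_const continuous_on_subset[OF rc]]]) auto
    have c2: "continuous_on S (\<lambda>y. \<theta> (q * r y))"
      by (rule continuous_on_compose2[OF th_c continuous_on_mult[OF continuous_on_const continuous_on_subset[OF rc]]]) auto
    have cr: "continuous_on S r" using continuous_on_subset[OF rc] by blast
    have cL: "continuous_on S \<Lambda>" using continuous_on_subset[OF \<Lambda>c] by blast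
    have c3: "continuous_on S (\<lambda>y. y / r y)"
      by (rule continuous_on_divide[OF continuous_on_id cr]) (simp add: rnz)
    have c4: "continuous_on S (\<lambda>y. \<theta>' (q * r y) * (q * (y / r y)))"
      by (rule continuous_on_mult[OF c1 continuous_on_mult[OF continuous_on_const c3]])
    have c5: "continuous_on S (\<lambda>y. \<theta>' (q * r y) * (q * (y / r y)) / \<Lambda> y)"
      by (rule continuous_on_divide[OF c4 cL]) (simp add: \<Lambda>nz)
    have c6: "continuous_on S (\<lambda>y. \<psi>\<^sup>2 * y / \<Lambda> y)"
      by (rule continuous_on_divide[OF continuous_on_mult[OF continuous_on_const continuous_on_id] cL]) (simp add: \<Lambda>nz)
    have c7: "continuous_on S (\<lambda>y. \<theta> (q * r y) * (\<psi>\<^sup>2 * y / \<Lambda> y) / (\<Lambda> y)\<^sup>2)"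
      by (rule continuous_on_divide[OF continuous_on_mult[OF c2 c6] continuous_on_power[OF cL]]) (simp add: \<Lambda>nz)
    show ?thesis unfolding g'_def by (rule continuous_on_diff[OF c5 c7])
  qed
  have g'b: "\<bar>g' y\<bar> \<le> M1 * q / L + M * \<psi> / L\<^sup>2" for y
  proof -
    have t1: "\<bar>\<theta>' (q * r y) * (q * (y / r y)) / \<Lambda> y\<bar> \<le> M1 * q / L"
    proof (cases "\<theta>' (q * r y) = 0")
      case True then show ?thesis using M1b[of 0] L q by simp
    next
      case False
      then have LL: "L \<le> \<Lambda> y" using Lb[of y] unfolding r_def \<Lambda>eq by blast
      have "\<bar>y / r y\<bar> \<le> 1" using ry[of y] r0[of y] by (simp add: abs_divide divide_le_eq_1)
      have M10: "0 \<le> M1" using M1b[of 0] by linarith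
      have "\<bar>\<theta>' (q * r y) * (q * (y / r y))\<bar> = \<bar>\<theta>' (q * r y)\<bar> * (q * \<bar>y / r y\<bar>)"
        using q by (simp add: abs_mult)
      also have "\<dots> \<le> M1 * (q * 1)"
        using M1b[of "q * r y"] q \<open>\<bar>y / r y\<bar> \<le> 1\<close> M10 by (intro mult_mono mult_left_mono) auto
      finally have X: "\<bar>\<theta>' (q * r y) * (q * (y / r y))\<bar> \<le> M1 * q" by simp
      have "\<bar>\<theta>' (q * r y) * (q * (y / r y)) / \<Lambda> y\<bar> = \<bar>\<theta>' (q * r y) * (q * (y / r y))\<bar> / \<Lambda> y"
        using \<Lambda>0[of y] by (simp only: abs_divide abs_of_pos)
      also have "\<dots> \<le> M1 * q / L"
        using X LL L M10 q by (intro frac_le) auto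
      finally show ?thesis .
    qed
    have t2: "\<bar>\<theta> (q * r y) * (\<psi>\<^sup>2 * y / \<Lambda> y) / (\<Lambda> y)\<^sup>2\<bar> \<le> M * \<psi> / L\<^sup>2"
    proof (cases "\<theta> (q * r y) = 0")
      case True then show ?thesis using Mb[of 0] L psi by simp
    next
      case False
      then have LL: "L \<le> \<Lambda> y" using Lb[of y] unfolding r_def \<Lambda>eq by blast
      have M0: "0 \<le> M" using Mb[of 0] by linarith
      have "\<bar>\<psi>\<^sup>2 * y / \<Lambda> y\<bar> = \<psi> * ((\<psi> * \<bar>y\<bar>) / \<Lambda> y)"
        using \<Lambda>0[of y] psi by (simp add: abs_mult abs_divide power2_eq_square)
      also have "\<dots> \<le> \<psi> * 1"
        using \<Lambda>y[of y] \<Lambda>0[of y] psi by (intro mult_left_mono) auto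
      finally have Y: "\<bar>\<psi>\<^sup>2 * y / \<Lambda> y\<bar> \<le> \<psi>" by simp
      have X: "\<bar>\<theta> (q * r y) * (\<psi>\<^sup>2 * y / \<Lambda> y)\<bar> \<le> M * \<psi>"
        unfolding abs_mult using Mb[of "q * r y"] Y by (intro mult_mono) auto
      have "L\<^sup>2 \<le> (\<Lambda> y)\<^sup>2" using LL L by (simp add: power_mono)
      have "\<bar>\<theta> (q * r y) * (\<psi>\<^sup>2 * y / \<Lambda> y) / (\<Lambda> y)\<^sup>2\<bar> = \<bar>\<theta> (q * r y) * (\<psi>\<^sup>2 * y / \<Lambda> y)\<bar> / (\<Lambda> y)\<^sup>2"
        by (simp only: abs_divide abs_power2)
      also have "\<dots> \<le> M * \<psi> / L\<^sup>2"
        using X \<open>L\<^sup>2 \<le> (\<Lambda> y)\<^sup>2\<close> L M0 psi by (intro frac_le) auto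
      finally show ?thesis .
    qed
    have "\<bar>g' y\<bar> \<le> \<bar>\<theta>' (q * r y) * (q * (y / r y)) / \<Lambda> y\<bar> + \<bar>\<theta> (q * r y) * (\<psi>\<^sup>2 * y / \<Lambda> y) / (\<Lambda> y)\<^sup>2\<bar>"
      unfolding g'_def by (rule abs_triangle_ineq4)
    then show ?thesis using t1 t2 by linarith
  qed
  have gb: "\<bar>g (sqrt D)\<bar> \<le> M / L"
  proof (cases "\<theta> (q * r (sqrt D)) = 0")
    case True then show ?thesis using Mb[of 0] L by (simp add: g_def)
  next
    case False
    then have LL: "L \<le> \<Lambda> (sqrt D)" using Lb[of "sqrt D"] unfolding r_def \<Lambda>eq by blast
    have M0: "0 \<le> M" using Mb[of 0] by linarith
    have "\<bar>g (sqrt D)\<bar> = \<bar>\<theta> (q * r (sqrt D))\<bar> / \<Lambda> (sqrt D)"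
      using \<Lambda>0[of "sqrt D"] by (simp only: g_def abs_divide abs_of_pos)
    also have "\<dots> \<le> M / L" using LL L M0 Mb[of "q * r (sqrt D)"] by (intro frac_le) auto
    finally show ?thesis .
  qed
  have ab: "- sqrt D \<le> sqrt D" using D by simp
  have main: "norm (integral {-sqrt D..sqrt D} (\<lambda>s. e s * of_real (g s))) \<le> 10 / sqrt \<mu> * (M / L + (sqrt D - - sqrt D) * (M1 * q / L + M * \<psi> / L\<^sup>2))"
    by (rule abel_bound[OF ab ec gd g'c Fb g'b gb])
  have "(\<lambda>y. exp (\<i> * of_real (\<tau> * sqrt (\<psi>\<^sup>2 * (y\<^sup>2 + \<rho>) + m2) + c * y))
            * of_real (\<theta> (q * sqrt (y\<^sup>2 + \<rho>)) / sqrt (\<psi>\<^sup>2 * (y\<^sup>2 + \<rho>) + m2))) = (\<lambda>s. e s * of_real (g s))"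
    by (simp add: fun_eq_iff \<Lambda>eq e_def g_def \<phi>_def r_def)
  then show ?thesis using main by (simp add: \<mu>_def)
qed


lemma fubini_line:
  fixes F :: "'a::euclidean_space \<Rightarrow> complex"
  assumes F: "integrable lborel F" and b: "b \<in> Basis"
  shows "integral\<^sup>L lborel F = (\<integral>x. (\<integral>y. F ((\<Sum>b'\<in>Basis-{b}. x b' *\<^sub>R b') + y *\<^sub>R b) \<partial>lborel) \<partial>(PiM (Basis-{b}) (\<lambda>_. lborel)))"
proof -
  interpret P: product_sigma_finite "\<lambda>_::'a. lborel :: real measure" by standard
  define S where "S = (\<lambda>f. \<Sum>b\<in>Basis. f b *\<^sub>R (b::'a))"
  have Sm: "S \<in> measurable (PiM Basis (\<lambda>_. lborel)) (borel :: 'a measure)"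
    unfolding S_def by measurable
  have Fm: "F \<in> borel_measurable borel" using borel_measurable_integrable[OF F] by simp
  have eq0: "integral\<^sup>L lborel F = integral\<^sup>L (distr (PiM Basis (\<lambda>_. lborel)) borel S) F"
    unfolding S_def by (subst lborel_eq[where 'a='a]) (rule refl)
  have int0: "integrable (distr (PiM Basis (\<lambda>_. lborel)) borel S) F"
    using F unfolding S_def by (subst (asm) lborel_eq[where 'a='a])
  have int1: "integrable (PiM Basis (\<lambda>_. lborel)) (\<lambda>x. F (S x))"
    using int0 integrable_distr_eq[OF Sm Fm] by simp
  have ins: "insert b (Basis - {b}) = Basis" using b by auto
  have fin: "finite (Basis - {b})" by simp
  have "integral\<^sup>L lborel F = (\<integral>x. F (S x) \<partial>(PiM Basis (\<lambda>_. lborel)))"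
    using eq0 integral_distr[OF Sm Fm] by simp
  also have "\<dots> = (\<integral>x. F (S x) \<partial>(PiM (insert b (Basis - {b})) (\<lambda>_. lborel)))" by (simp only: ins)
  also have "\<dots> = (\<integral>x. (\<integral>y. F (S (x(b := y))) \<partial>lborel) \<partial>(PiM (Basis-{b}) (\<lambda>_. lborel)))"
    by (rule P.product_integral_insert[OF fin]) (use int1 ins in auto)
  also have "\<dots> = (\<integral>x. (\<integral>y. F ((\<Sum>b'\<in>Basis-{b}. x b' *\<^sub>R b') + y *\<^sub>R b) \<partial>lborel) \<partial>(PiM (Basis-{b}) (\<lambda>_. lborel)))"
  proof -
    have "S (x(b := y)) = (\<Sum>b'\<in>Basis-{b}. x b' *\<^sub>R b') + y *\<^sub>R b" for x y
    proof -
      have "S (x(b := y)) = (x(b := y)) b *\<^sub>R b + (\<Sum>b'\<in>Basis-{b}. (x(b := y)) b' *\<^sub>R b')"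
        unfolding S_def by (rule sum.remove[OF finite_Basis b])
      also have "(\<Sum>b'\<in>Basis-{b}. (x(b := y)) b' *\<^sub>R b') = (\<Sum>b'\<in>Basis-{b}. x b' *\<^sub>R b')"
        by (rule sum.cong) auto
      finally show ?thesis by (simp only: fun_upd_same add.commute)
    qed
    then show ?thesis by simp
  qed
  finally show ?thesis .
qed


lemma fubini_bound:
  fixes F :: "'a::euclidean_space \<Rightarrow> complex"
  assumes F: "integrable lborel F" and b: "b \<in> Basis" and Cb: "Cb \<ge> 0" and R: "R \<ge> 0"
    and inside: "\<And>x. (\<forall>b'\<in>Basis-{b}. \<bar>x b'\<bar> \<le> R) \<Longrightarrow>
        norm (\<integral>y. F ((\<Sum>b'\<in>Basis-{b}. x b' *\<^sub>R b') + y *\<^sub>R b) \<partial>lborel) \<le> Cb"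
    and outside: "\<And>x b'. b' \<in> Basis-{b} \<Longrightarrow> \<bar>x b'\<bar> > R \<Longrightarrow>
        (\<integral>y. F ((\<Sum>b'\<in>Basis-{b}. x b' *\<^sub>R b') + y *\<^sub>R b) \<partial>lborel) = 0"
  shows "norm (integral UNIV F) \<le> Cb * (2 * R) ^ (DIM('a) - 1)"
proof -
  interpret P: product_sigma_finite "\<lambda>_::'a. lborel :: real measure" by standard
  define h where "h = (\<lambda>x. \<integral>y. F ((\<Sum>b'\<in>Basis-{b}. x b' *\<^sub>R b') + y *\<^sub>R b) \<partial>lborel)"
  define M where "M = PiM (Basis-{b}) (\<lambda>_::'a. lborel :: real measure)"
  define Box where "Box = PiE (Basis-{b}) (\<lambda>_::'a. {-R..R})"
  have eq: "integral UNIV F = integral\<^sup>L M h"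
    using integral_lborel[OF F] fubini_line[OF F b] by (simp add: h_def M_def)
  have card: "card (Basis - {b}) = DIM('a) - 1" using b by (simp add: card_Diff_singleton)
  have emB: "emeasure M Box = ennreal ((2 * R) ^ (DIM('a) - 1))"
  proof -
    have "emeasure M Box = (\<Prod>i\<in>Basis-{b}. emeasure lborel {-R..R})"
      unfolding M_def Box_def by (rule P.emeasure_PiM) auto
    also have "\<dots> = (\<Prod>i\<in>Basis-{b}. ennreal (2 * R))" using R by simp
    also have "\<dots> = ennreal ((2 * R) ^ card (Basis - {b}))" using R by (simp add: prod_ennreal ennreal_power)
    finally show ?thesis by (simp add: card)
  qed
  have Bsets: "Box \<in> sets M" unfolding M_def Box_def by (intro sets_PiM_I_finite) auto
  show ?thesis
  proof (cases "integrable M h")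
    case False
    then show ?thesis using eq Cb R by (simp add: not_integrable_integral_eq)
  next
    case True
    have "ennreal (norm (integral\<^sup>L M h)) \<le> (\<integral>\<^sup>+x. ennreal (norm (h x)) \<partial>M)"
      by (rule integral_norm_bound_ennreal[OF True])
    also have "\<dots> \<le> (\<integral>\<^sup>+x. ennreal Cb * indicator Box x \<partial>M)"
    proof (rule nn_integral_mono)
      fix x assume x: "x \<in> space M"
      show "ennreal (norm (h x)) \<le> ennreal Cb * indicator Box x"
      proof (cases "x \<in> Box")
        case True
        have "\<forall>b'\<in>Basis-{b}. \<bar>x b'\<bar> \<le> R"
        proof
          fix b' assume "b' \<in> Basis-{b}"
          then have "x b' \<in> {-R..R}" using True unfolding Box_def by blast
          then show "\<bar>x b'\<bar> \<le> R" by auto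
        qed
        then show ?thesis using inside True by (simp add: h_def ennreal_leI)
      next
        case False
        have xe: "x \<in> extensional (Basis - {b})" using x by (simp add: M_def space_PiM PiE_def)
        have "\<exists>b'\<in>Basis-{b}. x b' \<notin> {-R..R}" using False xe unfolding Box_def PiE_def Pi_def by blast
        then obtain b' where "b' \<in> Basis - {b}" "x b' \<notin> {-R..R}" by blast
        then have "b' \<in> Basis - {b}" "\<bar>x b'\<bar> > R" by auto
        then show ?thesis using outside by (simp add: h_def)
      qed
    qed
    also have "\<dots> = ennreal Cb * emeasure M Box" by (rule nn_integral_cmult_indicator[OF Bsets])
    also have "\<dots> = ennreal (Cb * (2 * R) ^ (DIM('a) - 1))" using Cb R by (simp add: emB ennreal_mult)
    finally have "norm (integral\<^sup>L M h) \<le> Cb * (2 * R) ^ (DIM('a) - 1)"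
      using Cb R by (subst (asm) ennreal_le_iff) auto
    then show ?thesis using eq by simp
  qed
qed


lemma theta_facts:
  fixes \<theta> :: "real \<Rightarrow> real"
  assumes sm: "smooth_real \<theta>" and supp: "closure {x. \<theta> x \<noteq> 0} \<subseteq> {1/6..3}"
  shows "\<And>x. (\<theta> has_real_derivative deriv \<theta> x) (at x)"
    and "continuous_on UNIV (deriv \<theta>)"
    and "\<And>x. \<theta> x \<noteq> 0 \<Longrightarrow> x \<in> {1/6..3}"
    and "\<And>x. deriv \<theta> x \<noteq> 0 \<Longrightarrow> x \<in> {1/6..3}"
    and "\<exists>M\<ge>0. \<forall>x. \<bar>\<theta> x\<bar> \<le> M"
    and "\<exists>M\<ge>0. \<forall>x. \<bar>deriv \<theta> x\<bar> \<le> M"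
proof -
  have dif0: "\<theta> differentiable (at x)" for x using sm[unfolded smooth_real_def, rule_format, of 0 x] by simp
  have dif1: "deriv \<theta> differentiable (at x)" for x using sm[unfolded smooth_real_def, rule_format, of 1 x] by simp
  show D: "(\<theta> has_real_derivative deriv \<theta> x) (at x)" for x
    using dif0 DERIV_deriv_iff_real_differentiable by blast
  show C: "continuous_on UNIV (deriv \<theta>)"
    by (intro continuous_at_imp_continuous_on ballI differentiable_imp_continuous_within dif1)
  show S0: "x \<in> {1/6..3}" if "\<theta> x \<noteq> 0" for x
  proof -
    have "x \<in> {x. \<theta> x \<noteq> 0}" using that by simp
    then have "x \<in> closure {x. \<theta> x \<noteq> 0}" by (rule subsetD[OF closure_subset])
    then show ?thesis by (rule subsetD[OF supp])
  qed
  show S1: "x \<in> {1/6..3}" if "deriv \<theta> x \<noteq> 0" for x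
  proof (rule ccontr)
    assume x: "x \<notin> {1/6..3}"
    define U where "U = - {1/6..3::real}"
    have oU: "open U" unfolding U_def by (intro open_Compl closed_atLeastAtMost)
    have z: "\<theta> y = 0" if "y \<in> U" for y using S0[of y] that by (auto simp: U_def)
    have "((\<lambda>_. 0) has_real_derivative deriv \<theta> x) (at x)"
      by (rule has_field_derivative_transform_within_open[OF D oU]) (use x z U_def in auto)
    then have "deriv \<theta> x = 0" using DERIV_const DERIV_unique by blast
    then show False using that by simp
  qed
  have cth: "continuous_on UNIV \<theta>"
    by (intro continuous_at_imp_continuous_on ballI differentiable_imp_continuous_within dif0)
  have bnd: "\<exists>M\<ge>0. \<forall>x. \<bar>f x\<bar> \<le> M" if cf: "continuous_on UNIV f" and sf: "\<And>x. f x \<noteq> 0 \<Longrightarrow> x \<in> {1/6..3}"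
    for f :: "real \<Rightarrow> real"
  proof -
    have "compact (f ` {1/6..3})"
      by (rule compact_continuous_image[OF continuous_on_subset[OF cf]]) auto
    then obtain B where B: "\<forall>y\<in>f ` {1/6..3}. norm y \<le> B" using compact_imp_bounded bounded_iff by metis
    show ?thesis
    proof (intro exI[of _ "max B 0"] conjI allI)
      fix x show "\<bar>f x\<bar> \<le> max B 0"
      proof (cases "f x = 0")
        case False
        then have "x \<in> {1/6..3}" by (rule sf)
        then have "\<bar>f x\<bar> \<le> B" using B by auto
        then show ?thesis by linarith
      qed simp
    qed simp
  qed
  show "\<exists>M\<ge>0. \<forall>x. \<bar>\<theta> x\<bar> \<le> M" by (rule bnd[OF cth S0])
  show "\<exists>M\<ge>0. \<forall>x. \<bar>deriv \<theta> x\<bar> \<le> M" by (rule bnd[OF C S1])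
qed


lemma line_bound2:
  fixes \<theta> \<theta>' :: "real \<Rightarrow> real"
  assumes psi: "\<psi> > 0" and h0: "h0 > 0" and eps: "\<epsilon>\<^sup>2 \<le> 2 * \<psi> * h0"
    and tau: "\<tau> > 0" and rho: "\<rho> > 0" and D: "0 \<le> D" "D \<le> \<rho>" and q: "q > 0"
    and rhoR: "sqrt \<rho> \<le> 3 / q"
    and thd: "\<And>x. (\<theta> has_real_derivative \<theta>' x) (at x)"
    and th'c: "continuous_on UNIV \<theta>'"
    and Mb: "\<And>x. \<bar>\<theta> x\<bar> \<le> M" and M1b: "\<And>x. \<bar>\<theta>' x\<bar> \<le> M1"
    and S0: "\<And>x. \<theta> x \<noteq> 0 \<Longrightarrow> x \<in> {1/6..3}"
    and S1: "\<And>x. \<theta>' x \<noteq> 0 \<Longrightarrow> x \<in> {1/6..3}"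
  shows "norm (integral {-sqrt D..sqrt D} (\<lambda>y. exp (\<i> * of_real (\<tau> * sqrt (\<psi>\<^sup>2 * (y\<^sup>2 + \<rho>) + (\<psi> * h0 - \<epsilon>\<^sup>2 / 4)) + c * y))
            * of_real (\<theta> (q * sqrt (y\<^sup>2 + \<rho>)) / sqrt (\<psi>\<^sup>2 * (y\<^sup>2 + \<rho>) + (\<psi> * h0 - \<epsilon>\<^sup>2 / 4)))))
         \<le> (10 * sqrt (2 * sqrt (18 * \<psi>\<^sup>2 + \<psi> * h0)) / \<psi> *
              ((M + 6 * M1 + 6 * M * \<psi> / min (\<psi> / 6) (sqrt (\<psi> * h0 / 2))) / min (\<psi> / 6) (sqrt (\<psi> * h0 / 2)))) / sqrt \<tau>"
proof -
  define m2 where "m2 = \<psi> * h0 - \<epsilon>\<^sup>2 / 4"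
  define P where "P = 1 / q"
  define X where "X = max 1 P"
  define m where "m = sqrt (\<psi> * h0 / 2)"
  define l where "l = min (\<psi> / 6) m"
  define u where "u = sqrt (18 * \<psi>\<^sup>2 + \<psi> * h0)"
  define K0 where "K0 = M + 6 * M1 + 6 * M * \<psi> / l"
  have P0: "P > 0" using q by (simp add: P_def)
  have X1: "X \<ge> 1" "P \<le> X" by (auto simp: X_def)
  have X0: "X > 0" using X1 by simp
  have m2m: "\<psi> * h0 / 2 \<le> m2" unfolding m2_def using eps by linarith
  have m2p: "m2 > 0" using m2m mult_pos_pos[OF psi h0] by linarith
  have m0: "m > 0" using psi h0 by (simp add: m_def)
  have l0: "l > 0" using psi m0 by (simp add: l_def)
  have u0: "u > 0" using psi h0 by (simp add: u_def add_pos_pos)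
  have M0: "0 \<le> M" using Mb[of 0] by linarith
  have M10: "0 \<le> M1" using M1b[of 0] by linarith
  have qP: "q * P = 1" using q by (simp add: P_def)
  have sD: "sqrt D \<le> 3 * P"
  proof -
    have "sqrt D \<le> sqrt \<rho>" by (rule real_sqrt_le_mono[OF D(2)])
    moreover have "3 / q = 3 * P" by (simp add: P_def)
    ultimately show ?thesis using rhoR by linarith
  qed
  define L where "L = l * X"
  define U where "U = u * X"
  have L0: "L > 0" using l0 X0 by (simp add: L_def)
  have Lb: "L \<le> sqrt (\<psi>\<^sup>2 * (y\<^sup>2 + \<rho>) + m2)"
    if "\<theta> (q * sqrt (y\<^sup>2 + \<rho>)) \<noteq> 0 \<or> \<theta>' (q * sqrt (y\<^sup>2 + \<rho>)) \<noteq> 0" for y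
  proof -
    have "q * sqrt (y\<^sup>2 + \<rho>) \<ge> 1/6" using that S0 S1 by fastforce
    then have r6: "P / 6 \<le> sqrt (y\<^sup>2 + \<rho>)" using q by (simp add: P_def field_simps)
    have y0: "0 \<le> y\<^sup>2 + \<rho>" using rho by simp
    have e1: "\<psi> * sqrt (y\<^sup>2 + \<rho>) \<le> sqrt (\<psi>\<^sup>2 * (y\<^sup>2 + \<rho>) + m2)"
    proof -
      have "\<psi> * sqrt (y\<^sup>2 + \<rho>) = sqrt (\<psi>\<^sup>2 * (y\<^sup>2 + \<rho>))" using psi y0 by (simp add: real_sqrt_mult)
      also have "\<dots> \<le> sqrt (\<psi>\<^sup>2 * (y\<^sup>2 + \<rho>) + m2)" using m2p by (intro real_sqrt_le_mono) simp
      finally show ?thesis .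
    qed
    have e2: "m \<le> sqrt (\<psi>\<^sup>2 * (y\<^sup>2 + \<rho>) + m2)"
      unfolding m_def using m2m y0 by (intro real_sqrt_le_mono) (smt (verit) mult_nonneg_nonneg zero_le_power2)
    show ?thesis
    proof (cases "P \<le> 1")
      case True
      then have "L = l" by (simp add: L_def X_def)
      then show ?thesis using e2 by (simp add: l_def)
    next
      case False
      then have "L = l * P" by (simp add: L_def X_def)
      also have "\<dots> \<le> \<psi> / 6 * P" using P0 by (intro mult_right_mono) (auto simp: l_def)
      also have "\<dots> \<le> \<psi> * sqrt (y\<^sup>2 + \<rho>)" using r6 psi by simp
      finally show ?thesis using e1 by linarith
    qed
  qed
  have Ub: "sqrt (\<psi>\<^sup>2 * (y\<^sup>2 + \<rho>) + m2) \<le> U" if "y\<^sup>2 \<le> D" for y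
  proof -
    have r9: "y\<^sup>2 + \<rho> \<le> 18 * P\<^sup>2"
    proof -
      have "sqrt \<rho> \<le> 3 * P" using rhoR by (simp add: P_def)
      then have "(sqrt \<rho>)\<^sup>2 \<le> (3 * P)\<^sup>2" by (rule power_mono) (use rho in simp)
      then have "\<rho> \<le> 9 * P\<^sup>2" using rho by (simp add: power_mult_distrib)
      then show ?thesis using that D by linarith
    qed
    have "\<psi>\<^sup>2 * (y\<^sup>2 + \<rho>) + m2 \<le> \<psi>\<^sup>2 * (18 * P\<^sup>2) + \<psi> * h0"
      using r9 m2m by (intro add_mono mult_left_mono) (auto simp: m2_def)
    also have "\<dots> \<le> (18 * \<psi>\<^sup>2 + \<psi> * h0) * X\<^sup>2"
    proof -
      have "P\<^sup>2 \<le> X\<^sup>2" using P0 X1 by (intro power_mono) auto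
      moreover have "1 \<le> X\<^sup>2" using X1 by (simp add: one_le_power)
      ultimately have "\<psi>\<^sup>2 * (18 * P\<^sup>2) + \<psi> * h0 * 1 \<le> \<psi>\<^sup>2 * (18 * X\<^sup>2) + \<psi> * h0 * X\<^sup>2"
        using psi h0 by (intro add_mono mult_left_mono) auto
      then show ?thesis by (simp add: algebra_simps)
    qed
    finally have "sqrt (\<psi>\<^sup>2 * (y\<^sup>2 + \<rho>) + m2) \<le> sqrt ((18 * \<psi>\<^sup>2 + \<psi> * h0) * X\<^sup>2)" by (rule real_sqrt_le_mono)
    also have "\<dots> = U" using X0 by (simp add: U_def u_def real_sqrt_mult)
    finally show ?thesis .
  qed
  have lb: "norm (integral {-sqrt D..sqrt D} (\<lambda>y. exp (\<i> * of_real (\<tau> * sqrt (\<psi>\<^sup>2 * (y\<^sup>2 + \<rho>) + m2) + c * y))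
            * of_real (\<theta> (q * sqrt (y\<^sup>2 + \<rho>)) / sqrt (\<psi>\<^sup>2 * (y\<^sup>2 + \<rho>) + m2))))
         \<le> 10 / sqrt (\<tau> * \<psi>\<^sup>2 / (2 * U)) * (M / L + 2 * sqrt D * (M1 * q / L + M * \<psi> / L\<^sup>2))"
    by (rule line_bound[OF psi m2p tau rho D q thd th'c Mb M1b L0 Lb Ub])
  have A: "10 / sqrt (\<tau> * \<psi>\<^sup>2 / (2 * U)) = 10 * sqrt (2 * u) * sqrt X / (\<psi> * sqrt \<tau>)"
    using psi u0 X0 tau by (simp add: U_def real_sqrt_divide real_sqrt_mult field_simps)
  have Bk: "M / L + 2 * sqrt D * (M1 * q / L + M * \<psi> / L\<^sup>2) \<le> K0 / (l * X)"
  proof -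
    have t0: "0 \<le> M1 * q / L + M * \<psi> / L\<^sup>2" using M0 M10 q psi L0 by simp
    have "2 * sqrt D * (M1 * q / L + M * \<psi> / L\<^sup>2) \<le> (6 * P) * (M1 * q / L + M * \<psi> / L\<^sup>2)"
      using sD t0 by (intro mult_right_mono) auto
    also have "\<dots> = 6 * M1 * (q * P) / L + 6 * M * \<psi> * P / L\<^sup>2" by (simp add: algebra_simps)
    also have "\<dots> = 6 * M1 / (l * X) + 6 * M * \<psi> * P / (l\<^sup>2 * X\<^sup>2)" by (simp add: qP L_def power_mult_distrib)
    also have "\<dots> \<le> 6 * M1 / (l * X) + 6 * M * \<psi> / l / (l * X)"
    proof -
      have "6 * M * \<psi> * P / (l\<^sup>2 * X\<^sup>2) = (6 * M * \<psi> / l / (l * X)) * (P / X)"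
        using l0 X0 by (simp add: field_simps power2_eq_square)
      also have "\<dots> \<le> (6 * M * \<psi> / l / (l * X)) * 1"
        using X1 X0 P0 M0 psi l0 by (intro mult_left_mono) auto
      finally show ?thesis by simp
    qed
    finally have "2 * sqrt D * (M1 * q / L + M * \<psi> / L\<^sup>2) \<le> 6 * M1 / (l * X) + 6 * M * \<psi> / l / (l * X)" .
    then show ?thesis by (simp add: K0_def L_def add_divide_distrib)
  qed
  have K00: "0 \<le> K0" using M0 M10 psi l0 by (simp add: K0_def)
  have "10 / sqrt (\<tau> * \<psi>\<^sup>2 / (2 * U)) * (M / L + 2 * sqrt D * (M1 * q / L + M * \<psi> / L\<^sup>2))
      \<le> 10 * sqrt (2 * u) * sqrt X / (\<psi> * sqrt \<tau>) * (K0 / (l * X))"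
    unfolding A using Bk psi tau u0 X0 by (intro mult_left_mono) auto
  also have "\<dots> = (10 * sqrt (2 * u) / \<psi> * (K0 / l)) / sqrt \<tau> * (sqrt X / X)"
    using X0 l0 psi tau by (simp add: field_simps)
  also have "\<dots> \<le> (10 * sqrt (2 * u) / \<psi> * (K0 / l)) / sqrt \<tau> * 1"
  proof (rule mult_left_mono)
    have s1: "1 \<le> sqrt X" using X1 by simp
    have "sqrt X * 1 \<le> sqrt X * sqrt X" by (rule mult_left_mono[OF s1]) (use X0 in simp)
    then have "sqrt X \<le> X" using X0 by simp
    then show "sqrt X / X \<le> 1" using X0 by (simp add: divide_le_eq_1)
    show "0 \<le> 10 * sqrt (2 * u) / \<psi> * (K0 / l) / sqrt \<tau>" using psi u0 K00 l0 tau by simp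
  qed
  finally show ?thesis using lb by (simp add: m2_def u_def K0_def l_def m_def)
qed


lemma lam_lower:
  assumes psi: "\<psi> > 0" and h0: "h0 > 0" and eps: "\<epsilon>\<^sup>2 \<le> 2 * \<psi> * h0"
    and q: "q > 0" and r: "r \<ge> 0" and qr: "q * r \<ge> 1/6"
  shows "min (\<psi> / 6) (sqrt (\<psi> * h0 / 2)) * max 1 (1 / q) \<le> sqrt (\<psi>\<^sup>2 * r\<^sup>2 + (\<psi> * h0 - \<epsilon>\<^sup>2 / 4))"
proof -
  define m2 where "m2 = \<psi> * h0 - \<epsilon>\<^sup>2 / 4"
  have m2m: "\<psi> * h0 / 2 \<le> m2" unfolding m2_def using eps by linarith
  have m2p: "m2 > 0" using m2m mult_pos_pos[OF psi h0] by linarith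
  have r6: "1 / q / 6 \<le> r" using q qr by (simp add: field_simps)
  have e1: "\<psi> * r \<le> sqrt (\<psi>\<^sup>2 * r\<^sup>2 + m2)"
  proof -
    have "\<psi> * r = sqrt (\<psi>\<^sup>2 * r\<^sup>2)" using psi r by (simp add: real_sqrt_mult)
    also have "\<dots> \<le> sqrt (\<psi>\<^sup>2 * r\<^sup>2 + m2)" using m2p by (intro real_sqrt_le_mono) simp
    finally show ?thesis .
  qed
  have e2: "sqrt (\<psi> * h0 / 2) \<le> sqrt (\<psi>\<^sup>2 * r\<^sup>2 + m2)"
  proof (rule real_sqrt_le_mono)
    have "0 \<le> \<psi>\<^sup>2 * r\<^sup>2" by simp
    then show "\<psi> * h0 / 2 \<le> \<psi>\<^sup>2 * r\<^sup>2 + m2" using m2m by linarith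
  qed
  show ?thesis
  proof (cases "1 / q \<le> 1")
    case True
    then have "min (\<psi> / 6) (sqrt (\<psi> * h0 / 2)) * max 1 (1 / q) = min (\<psi> / 6) (sqrt (\<psi> * h0 / 2))" by simp
    also have "\<dots> \<le> sqrt (\<psi> * h0 / 2)" by simp
    finally show ?thesis using e2 unfolding m2_def by linarith
  next
    case False
    then have "min (\<psi> / 6) (sqrt (\<psi> * h0 / 2)) * max 1 (1 / q) = min (\<psi> / 6) (sqrt (\<psi> * h0 / 2)) * (1 / q)" by simp
    also have "\<dots> \<le> \<psi> / 6 * (1 / q)" using q by (intro mult_right_mono) auto
    also have "\<dots> = \<psi> * (1 / q / 6)" by simp
    also have "\<dots> \<le> \<psi> * r" by (rule mult_left_mono[OF r6]) (use psi in simp)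
    finally show ?thesis using e1 unfolding m2_def by linarith
  qed
qed

lemma line_int_bound:
  fixes \<theta> \<theta>' :: "real \<Rightarrow> real" and w :: complex
  assumes psi: "\<psi> > 0" and h0: "h0 > 0" and eps: "\<epsilon>\<^sup>2 \<le> 2 * \<psi> * h0"
    and tau: "\<tau> > 0" and rho: "\<rho> \<ge> 0" and D: "0 \<le> D" "D \<le> \<rho>" and q: "q > 0"
    and thd: "\<And>x. (\<theta> has_real_derivative \<theta>' x) (at x)"
    and th'c: "continuous_on UNIV \<theta>'"
    and Mb: "\<And>x. \<bar>\<theta> x\<bar> \<le> M" and M1b: "\<And>x. \<bar>\<theta>' x\<bar> \<le> M1"
    and S0: "\<And>x. \<theta> x \<noteq> 0 \<Longrightarrow> x \<in> {1/6..3}"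
    and S1: "\<And>x. \<theta>' x \<noteq> 0 \<Longrightarrow> x \<in> {1/6..3}"
    and w: "norm w = 1"
    and S: "S = {-sqrt D..sqrt D} \<or> S = {-sqrt D<..<sqrt D}"
  shows "norm (\<integral>y. indicator S y *\<^sub>R (w * (exp (\<i> * of_real (\<tau> * sqrt (\<psi>\<^sup>2 * (y\<^sup>2 + \<rho>) + (\<psi> * h0 - \<epsilon>\<^sup>2 / 4)) + c * y))
            * of_real (\<theta> (q * sqrt (y\<^sup>2 + \<rho>)) / sqrt (\<psi>\<^sup>2 * (y\<^sup>2 + \<rho>) + (\<psi> * h0 - \<epsilon>\<^sup>2 / 4))))) \<partial>lborel)
         \<le> (10 * sqrt (2 * sqrt (18 * \<psi>\<^sup>2 + \<psi> * h0)) / \<psi> *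
              ((M + 6 * M1 + 6 * M * \<psi> / min (\<psi> / 6) (sqrt (\<psi> * h0 / 2))) / min (\<psi> / 6) (sqrt (\<psi> * h0 / 2)))) / sqrt \<tau>"
    (is "norm (\<integral>y. indicator S y *\<^sub>R (w * ?G y) \<partial>lborel) \<le> ?C / sqrt \<tau>")
proof -
  have M0: "0 \<le> M" using Mb[of 0] by linarith
  have M10: "0 \<le> M1" using M1b[of 0] by linarith
  have l0: "0 < min (\<psi> / 6) (sqrt (\<psi> * h0 / 2))" using psi h0 by simp
  have C0: "0 \<le> ?C / sqrt \<tau>" using M0 M10 l0 psi h0 tau by (simp add: add_nonneg_nonneg)
  have key: "norm (integral {-sqrt D..sqrt D} ?G) \<le> ?C / sqrt \<tau>"
  proof (cases "\<rho> = 0")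
    case True
    then have "D = 0" using D by simp
    then show ?thesis using C0 by simp
  next
    case False
    then have rho0: "\<rho> > 0" using rho by simp
    show ?thesis
    proof (cases "sqrt \<rho> \<le> 3 / q")
      case True
      show ?thesis by (rule line_bound2[OF psi h0 eps tau rho0 D q True thd th'c Mb M1b S0 S1])
    next
      case False
      have G0: "?G y = 0" for y
      proof -
        have "sqrt \<rho> \<le> sqrt (y\<^sup>2 + \<rho>)" by (intro real_sqrt_le_mono) simp
        then have "3 / q < sqrt (y\<^sup>2 + \<rho>)" using False by linarith
        then have "3 < q * sqrt (y\<^sup>2 + \<rho>)" using q by (simp add: field_simps)
        then have "\<theta> (q * sqrt (y\<^sup>2 + \<rho>)) = 0" using S0 by fastforce
        then show ?thesis by simp
      qed
      have "?G = (\<lambda>_. 0)" using G0 by (intro ext)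
      then show ?thesis using C0 by (simp only: integral_0 norm_zero)
    qed
  qed
  show ?thesis
  proof (cases "integrable lborel (\<lambda>y. indicator S y *\<^sub>R (w * ?G y))")
    case False
    then show ?thesis using C0 by (simp add: not_integrable_integral_eq)
  next
    case True
    have "(\<integral>y. indicator S y *\<^sub>R (w * ?G y) \<partial>lborel) = integral UNIV (\<lambda>y. indicator S y *\<^sub>R (w * ?G y))"
      using integral_lborel[OF True] by simp
    also have "\<dots> = integral S (\<lambda>y. w * ?G y)"
    proof -
      have "(\<lambda>y. indicator S y *\<^sub>R (w * ?G y)) = (\<lambda>y. if y \<in> S then w * ?G y else 0)"
        by (auto simp: indicator_def fun_eq_iff)
      then show ?thesis by (simp only: integral_restrict_UNIV)
    qed
    also have "\<dots> = w * integral S ?G" by (rule integral_mult_right)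
    also have "integral S ?G = integral {-sqrt D..sqrt D} ?G"
      using S integral_open_interval_real[of "-sqrt D" "sqrt D" ?G] by auto
    finally show ?thesis using key w by (simp add: norm_mult)
  qed
qed


lemma line_inner:
  fixes x :: "'a::euclidean_space \<Rightarrow> real" and b :: "'a"
  assumes b: "b \<in> Basis" and b': "b' \<in> Basis"
  shows "((\<Sum>c\<in>Basis-{b}. x c *\<^sub>R c) + y *\<^sub>R b) \<bullet> b' = (if b' = b then y else x b')"
proof -
  have "(\<Sum>c\<in>Basis-{b}. x c *\<^sub>R c) \<bullet> b' = (\<Sum>c\<in>Basis-{b}. x c * (c \<bullet> b'))"
    by (simp add: inner_sum_left)
  also have "\<dots> = (\<Sum>c\<in>Basis-{b}. if c = b' then x c else 0)"
    using b' by (intro sum.cong) (auto simp: inner_Basis)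
  also have "\<dots> = (if b' = b then 0 else x b')"
    using b' by (auto simp: sum.delta)
  finally show ?thesis using b b' by (auto simp: inner_add_left inner_Basis)
qed

lemma line_norm:
  fixes x :: "'a::euclidean_space \<Rightarrow> real" and b :: "'a"
  assumes b: "b \<in> Basis"
  shows "norm ((\<Sum>c\<in>Basis-{b}. x c *\<^sub>R c) + y *\<^sub>R b) = sqrt (y\<^sup>2 + (norm (\<Sum>c\<in>Basis-{b}. x c *\<^sub>R c))\<^sup>2)"
proof -
  define \<eta> where "\<eta> = (\<Sum>c\<in>Basis-{b}. x c *\<^sub>R c)"
  have "\<eta> \<bullet> b = 0" unfolding \<eta>_def using b by (simp add: inner_sum_left inner_Basis)
  then have "orthogonal \<eta> (y *\<^sub>R b)" by (simp add: orthogonal_def)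
  then have "(norm (\<eta> + y *\<^sub>R b))\<^sup>2 = (norm \<eta>)\<^sup>2 + y\<^sup>2" using b by (simp add: norm_add_Pythagorean)
  then have "norm (\<eta> + y *\<^sub>R b) = sqrt ((norm \<eta>)\<^sup>2 + y\<^sup>2)" by (metis norm_ge_zero real_sqrt_unique)
  then show ?thesis unfolding \<eta>_def by (simp add: add.commute)
qed

lemma line_norm_ge:
  fixes v :: "'a::euclidean_space"
  assumes "b' \<in> Basis"
  shows "\<bar>v \<bullet> b'\<bar> \<le> norm v" using Basis_le_norm[OF assms] .


lemma Fz_basic:
  fixes \<theta> :: "real \<Rightarrow> real" and z :: "real ^ 'n"
  assumes psi: "\<psi> > 0" and h0: "h0 > 0" and eps: "\<epsilon>\<^sup>2 \<le> 2 * \<psi> * h0" and q: "q > 0"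
    and thc: "continuous_on UNIV \<theta>"
    and S0: "\<And>x. \<theta> x \<noteq> 0 \<Longrightarrow> x \<in> {1/6..3}"
    and Fz: "Fz = (\<lambda>\<xi>::real^'n. exp (\<i> * of_real (\<xi> \<bullet> z)) * of_real (\<theta> (q * norm \<xi>))
                 * exp (\<i> * of_real (\<tau> * lam \<psi> h0 \<epsilon> \<xi>)) / of_real (lam \<psi> h0 \<epsilon> \<xi>))"
  shows "\<And>\<xi>::real^'n. lam \<psi> h0 \<epsilon> \<xi> = sqrt (\<psi>\<^sup>2 * (norm \<xi>)\<^sup>2 + (\<psi> * h0 - \<epsilon>\<^sup>2 / 4))"
    and "\<And>\<xi>::real^'n. lam \<psi> h0 \<epsilon> \<xi> > 0"
    and "\<And>\<xi>. norm \<xi> > 3 / q \<Longrightarrow> Fz \<xi> = 0"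
    and "continuous_on UNIV Fz"
    and "integrable lborel Fz"
proof -
  show lamEq: "lam \<psi> h0 \<epsilon> \<xi> = sqrt (\<psi>\<^sup>2 * (norm \<xi>)\<^sup>2 + (\<psi> * h0 - \<epsilon>\<^sup>2 / 4))" for \<xi> :: "real^'n"
    by (simp add: lam_def add_diff_eq)
  have m2p: "\<psi> * h0 - \<epsilon>\<^sup>2 / 4 > 0" using eps mult_pos_pos[OF psi h0] by linarith
  show lam0: "lam \<psi> h0 \<epsilon> \<xi> > 0" for \<xi> :: "real^'n"
  proof -
    have "0 \<le> \<psi>\<^sup>2 * (norm \<xi>)\<^sup>2" by simp
    then have "0 < \<psi>\<^sup>2 * (norm \<xi>)\<^sup>2 + (\<psi> * h0 - \<epsilon>\<^sup>2 / 4)" using m2p by linarith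
    then show ?thesis unfolding lamEq by simp
  qed
  show zero: "Fz \<xi> = 0" if "norm \<xi> > 3 / q" for \<xi>
  proof -
    have "3 < q * norm \<xi>" using that q by (simp add: field_simps)
    then have "\<theta> (q * norm \<xi>) = 0" using S0 by fastforce
    then show ?thesis by (simp add: Fz)
  qed
  have lc: "continuous_on UNIV (lam \<psi> h0 \<epsilon> :: real^'n \<Rightarrow> real)"
    unfolding lam_def by (intro continuous_intros)
  have c1: "continuous_on UNIV (\<lambda>\<xi>::real^'n. \<theta> (q * norm \<xi>))"
    by (rule continuous_on_compose2[OF thc]) (auto intro!: continuous_intros)
  have c2: "continuous_on UNIV (\<lambda>\<xi>::real^'n. exp (\<i> * of_real (\<xi> \<bullet> z)))"
    by (intro continuous_intros)
  have c3: "continuous_on UNIV (\<lambda>\<xi>::real^'n. exp (\<i> * of_real (\<tau> * lam \<psi> h0 \<epsilon> \<xi>)))"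
    by (intro continuous_on_exp continuous_on_mult continuous_on_const continuous_on_of_real lc)
  have c4: "continuous_on UNIV (\<lambda>\<xi>::real^'n. complex_of_real (lam \<psi> h0 \<epsilon> \<xi>))"
    by (intro continuous_on_of_real lc)
  have lnz: "complex_of_real (lam \<psi> h0 \<epsilon> \<xi>) \<noteq> 0" for \<xi> :: "real^'n" using lam0[of \<xi>] by simp
  have lnz0: "lam \<psi> h0 \<epsilon> \<xi> \<noteq> 0" for \<xi> :: "real^'n" using lam0[of \<xi>] by simp
  show Fc: "continuous_on UNIV Fz"
    unfolding Fz
    by (rule continuous_on_divide[OF continuous_on_mult[OF continuous_on_mult[OF c2 continuous_on_of_real[OF c1]] c3] c4])
       (use lnz0 in auto)
  have "integrable lborel (\<lambda>x. indicator (cball 0 (3/q)) x *\<^sub>R Fz x)"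
    by (rule borel_integrable_compact[OF compact_cball continuous_on_subset[OF Fc]]) auto
  moreover have "(\<lambda>x. indicator (cball 0 (3/q)) x *\<^sub>R Fz x) = Fz"
  proof
    fix x show "indicator (cball 0 (3/q)) x *\<^sub>R Fz x = Fz x"
      using zero[of x] by (cases "norm x \<le> 3 / q") (auto simp: indicator_def)
  qed
  ultimately show "integrable lborel Fz" by simp
qed


lemma trivial_bound:
  fixes \<theta> :: "real \<Rightarrow> real" and z :: "real ^ 'n"
  assumes psi: "\<psi> > 0" and h0: "h0 > 0" and eps: "\<epsilon>\<^sup>2 \<le> 2 * \<psi> * h0" and q: "q > 0"
    and thc: "continuous_on UNIV \<theta>"
    and Mb: "\<And>x. \<bar>\<theta> x\<bar> \<le> M"
    and S0: "\<And>x. \<theta> x \<noteq> 0 \<Longrightarrow> x \<in> {1/6..3}"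
    and Fz: "Fz = (\<lambda>\<xi>::real^'n. exp (\<i> * of_real (\<xi> \<bullet> z)) * of_real (\<theta> (q * norm \<xi>))
                 * exp (\<i> * of_real (\<tau> * lam \<psi> h0 \<epsilon> \<xi>)) / of_real (lam \<psi> h0 \<epsilon> \<xi>))"
  shows "norm (integral UNIV Fz) \<le> M / (min (\<psi> / 6) (sqrt (\<psi> * h0 / 2)) * max 1 (1 / q)) * (2 * (3 / q)) ^ CARD('n)"
proof -
  note FB = Fz_basic[OF psi h0 eps q thc S0 Fz]
  define l where "l = min (\<psi> / 6) (sqrt (\<psi> * h0 / 2))"
  define X where "X = max 1 (1 / q)"
  define K where "K = M / (l * X)"
  define R where "R = 3 / q"
  have R0: "R > 0" using q by (simp add: R_def)
  have l0: "l > 0" using psi h0 by (simp add: l_def)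
  have X0: "X > 0" by (simp add: X_def)
  have M0: "0 \<le> M" using Mb[of 0] by linarith
  define a :: "real^'n" where "a = - (R *\<^sub>R One)"
  define box where "box = cbox a (a + (2 * R) *\<^sub>R One)"
  define g where "g = (\<lambda>\<xi>::real^'n. if \<xi> \<in> box then K else 0)"
  have gint: "(g has_integral (Henstock_Kurzweil_Integration.content box *\<^sub>R K)) UNIV"
    unfolding g_def has_integral_restrict_UNIV box_def by (rule has_integral_const)
  have cont: "Henstock_Kurzweil_Integration.content box = (2 * R) ^ CARD('n)"
    unfolding box_def using R0 by (simp add: content_cbox_plus)
  have Fint: "Fz integrable_on UNIV" by (rule integrable_on_lborel[OF FB(5)])
  have bound: "norm (Fz \<xi>) \<le> g \<xi>" for \<xi>
  proof (cases "\<xi> \<in> box")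
    case False
    then obtain i where i: "i \<in> Basis" "\<not> (a \<bullet> i \<le> \<xi> \<bullet> i \<and> \<xi> \<bullet> i \<le> (a + (2 * R) *\<^sub>R One) \<bullet> i)"
      unfolding box_def mem_box by blast
    have "a \<bullet> i = - R" "(a + (2 * R) *\<^sub>R One) \<bullet> i = R" using i(1) by (simp_all add: a_def inner_add_left inner_diff_left)
    then have "R < \<bar>\<xi> \<bullet> i\<bar>" using i(2) by auto
    then have "R < norm \<xi>" using Basis_le_norm[OF i(1), of \<xi>] by linarith
    then have "Fz \<xi> = 0" using FB(3) by (simp add: R_def)
    then show ?thesis using False by (simp add: g_def)
  next
    case True
    have nF: "norm (Fz \<xi>) = \<bar>\<theta> (q * norm \<xi>)\<bar> / lam \<psi> h0 \<epsilon> \<xi>"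
      using FB(2)[of \<xi>] by (simp add: Fz norm_mult norm_divide)
    have K0: "0 \<le> K" using M0 l0 X0 by (simp add: K_def)
    show ?thesis
    proof (cases "\<theta> (q * norm \<xi>) = 0")
      case True
      then show ?thesis using \<open>\<xi> \<in> box\<close> K0 nF by (simp add: g_def)
    next
      case False
      then have "q * norm \<xi> \<ge> 1/6" using S0 by fastforce
      then have LL: "l * X \<le> lam \<psi> h0 \<epsilon> \<xi>"
        using lam_lower[OF psi h0 eps q norm_ge_zero] FB(1)[of \<xi>] by (simp add: l_def X_def)
      have "\<bar>\<theta> (q * norm \<xi>)\<bar> / lam \<psi> h0 \<epsilon> \<xi> \<le> M / (l * X)"
        using LL l0 X0 M0 Mb[of "q * norm \<xi>"] by (intro frac_le) auto
      then show ?thesis using \<open>\<xi> \<in> box\<close> nF by (simp add: g_def K_def)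
    qed
  qed
  have "norm (integral UNIV Fz) \<le> integral UNIV g"
    by (rule integral_norm_bound_integral[OF Fint]) (use gint bound in auto)
  also have "\<dots> = (2 * R) ^ CARD('n) * K" using integral_unique[OF gint] cont by simp
  finally show ?thesis by (simp add: K_def l_def X_def R_def mult.commute)
qed


lemma decay_bound:
  fixes \<theta> \<theta>' :: "real \<Rightarrow> real" and z :: "real ^ 'n"
  assumes card: "CARD('n) \<ge> 2"
    and psi: "\<psi> > 0" and h0: "h0 > 0" and eps: "\<epsilon>\<^sup>2 \<le> 2 * \<psi> * h0"
    and tau: "\<tau> > 0" and q: "q > 0"
    and thd: "\<And>x. (\<theta> has_real_derivative \<theta>' x) (at x)"
    and th'c: "continuous_on UNIV \<theta>'"
    and Mb: "\<And>x. \<bar>\<theta> x\<bar> \<le> M" and M1b: "\<And>x. \<bar>\<theta>' x\<bar> \<le> M1"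
    and S0: "\<And>x. \<theta> x \<noteq> 0 \<Longrightarrow> x \<in> {1/6..3}"
    and S1: "\<And>x. \<theta>' x \<noteq> 0 \<Longrightarrow> x \<in> {1/6..3}"
    and Fz: "Fz = (\<lambda>\<xi>::real^'n. exp (\<i> * of_real (\<xi> \<bullet> z)) * of_real (\<theta> (q * norm \<xi>))
                 * exp (\<i> * of_real (\<tau> * lam \<psi> h0 \<epsilon> \<xi>)) / of_real (lam \<psi> h0 \<epsilon> \<xi>))"
  shows "norm (integral UNIV Fz) \<le> 2 * ((10 * sqrt (2 * sqrt (18 * \<psi>\<^sup>2 + \<psi> * h0)) / \<psi> *
              ((M + 6 * M1 + 6 * M * \<psi> / min (\<psi> / 6) (sqrt (\<psi> * h0 / 2))) / min (\<psi> / 6) (sqrt (\<psi> * h0 / 2)))) / sqrt \<tau>)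
            * (2 * (3 / q)) ^ (CARD('n) - 1)"
proof -
  have thc: "continuous_on UNIV \<theta>"
    using DERIV_isCont[OF thd] by (intro continuous_at_imp_continuous_on) auto
  note FB = Fz_basic[OF psi h0 eps q thc S0 Fz]
  define Cb where "Cb = (10 * sqrt (2 * sqrt (18 * \<psi>\<^sup>2 + \<psi> * h0)) / \<psi> *
              ((M + 6 * M1 + 6 * M * \<psi> / min (\<psi> / 6) (sqrt (\<psi> * h0 / 2))) / min (\<psi> / 6) (sqrt (\<psi> * h0 / 2)))) / sqrt \<tau>"
  define G where "G = (\<lambda>\<rho> c y. exp (\<i> * of_real (\<tau> * sqrt (\<psi>\<^sup>2 * (y\<^sup>2 + \<rho>) + (\<psi> * h0 - \<epsilon>\<^sup>2 / 4)) + c * y))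
            * of_real (\<theta> (q * sqrt (y\<^sup>2 + \<rho>)) / sqrt (\<psi>\<^sup>2 * (y\<^sup>2 + \<rho>) + (\<psi> * h0 - \<epsilon>\<^sup>2 / 4))))"
  have LB: "norm (\<integral>y. indicator S y *\<^sub>R (w * G \<rho> c y) \<partial>lborel) \<le> Cb"
    if "\<rho> \<ge> 0" "0 \<le> D" "D \<le> \<rho>" "S = {-sqrt D..sqrt D} \<or> S = {-sqrt D<..<sqrt D}" "norm w = 1"
    for S D \<rho> c and w :: complex
    unfolding G_def Cb_def
    by (rule line_int_bound[OF psi h0 eps tau that(1-3) q thd th'c Mb M1b S0 S1 that(5,4)])
  have M0: "0 \<le> M" using Mb[of 0] by linarith
  have M10: "0 \<le> M1" using M1b[of 0] by linarith
  have Cb0: "0 \<le> Cb" using M0 M10 psi h0 tau by (simp add: Cb_def add_nonneg_nonneg)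
  define R where "R = 3 / q"
  have R0: "0 \<le> R" using q by (simp add: R_def)
  have line: "Fz ((\<Sum>c\<in>Basis-{b}. x c *\<^sub>R c) + y *\<^sub>R b)
      = exp (\<i> * of_real ((\<Sum>c\<in>Basis-{b}. x c *\<^sub>R c) \<bullet> z)) * G ((norm (\<Sum>c\<in>Basis-{b}. x c *\<^sub>R c))\<^sup>2) (b \<bullet> z) y"
    if b: "b \<in> Basis" for b :: "real^'n" and x y
  proof -
    define \<eta> where "\<eta> = (\<Sum>c\<in>Basis-{b}. x c *\<^sub>R c)"
    define \<rho> where "\<rho> = (norm \<eta>)\<^sup>2"
    have n: "norm (\<eta> + y *\<^sub>R b) = sqrt (y\<^sup>2 + \<rho>)" unfolding \<eta>_def \<rho>_def by (rule line_norm[OF b])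
    have n2: "(norm (\<eta> + y *\<^sub>R b))\<^sup>2 = y\<^sup>2 + \<rho>" unfolding n by (simp add: \<rho>_def)
    have lam: "lam \<psi> h0 \<epsilon> (\<eta> + y *\<^sub>R b) = sqrt (\<psi>\<^sup>2 * (y\<^sup>2 + \<rho>) + (\<psi> * h0 - \<epsilon>\<^sup>2 / 4))"
      using FB(1)[of "\<eta> + y *\<^sub>R b"] n2 by simp
    have iz: "(\<eta> + y *\<^sub>R b) \<bullet> z = \<eta> \<bullet> z + y * (b \<bullet> z)" by (simp add: inner_add_left)
    have "Fz (\<eta> + y *\<^sub>R b) = exp (\<i> * of_real (\<eta> \<bullet> z + y * (b \<bullet> z))) * of_real (\<theta> (q * sqrt (y\<^sup>2 + \<rho>)))
        * exp (\<i> * of_real (\<tau> * sqrt (\<psi>\<^sup>2 * (y\<^sup>2 + \<rho>) + (\<psi> * h0 - \<epsilon>\<^sup>2 / 4))))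
        / of_real (sqrt (\<psi>\<^sup>2 * (y\<^sup>2 + \<rho>) + (\<psi> * h0 - \<epsilon>\<^sup>2 / 4)))"
      by (simp only: Fz iz lam n)
    also have "\<dots> = exp (\<i> * of_real (\<eta> \<bullet> z)) * G \<rho> (b \<bullet> z) y"
      unfolding G_def by (simp add: exp_add[symmetric] distrib_left mult.commute mult.left_commute add_ac)
    finally show ?thesis unfolding \<eta>_def \<rho>_def .
  qed
  have outside: "Fz ((\<Sum>c\<in>Basis-{b}. x c *\<^sub>R c) + y *\<^sub>R b) = 0"
    if b: "b \<in> Basis" and b': "b' \<in> Basis - {b}" and xb: "\<bar>x b'\<bar> > R" for b b' :: "real^'n" and x y
  proof -
    have "((\<Sum>c\<in>Basis-{b}. x c *\<^sub>R c) + y *\<^sub>R b) \<bullet> b' = x b'"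
      using line_inner[OF b, of b' x y] b' by auto
    then have "\<bar>x b'\<bar> \<le> norm ((\<Sum>c\<in>Basis-{b}. x c *\<^sub>R c) + y *\<^sub>R b)"
      using Basis_le_norm[of b' "(\<Sum>c\<in>Basis-{b}. x c *\<^sub>R c) + y *\<^sub>R b"] b' by simp
    then show ?thesis using xb FB(3) by (simp add: R_def)
  qed
  obtain i1 i2 :: 'n where i12: "i1 \<noteq> i2"
  proof -
    have "\<not> (card (UNIV :: 'n set) \<le> Suc 0)" using card by simp
    then have "\<not> (\<forall>a\<in>(UNIV::'n set). \<forall>b\<in>UNIV. a = b)" using card_le_Suc0_iff_eq[of "UNIV :: 'n set"] by simp
    then show ?thesis using that by blast
  qed
  define b1 :: "real^'n" where "b1 = axis i1 1"
  define b2 :: "real^'n" where "b2 = axis i2 1"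
  have b1: "b1 \<in> Basis" and b2: "b2 \<in> Basis" by (simp_all add: b1_def b2_def axis_in_Basis_iff)
  have b12: "b1 \<noteq> b2" using i12 by (simp add: b1_def b2_def axis_eq_axis)
  define A where "A = {\<xi>::real^'n. 2 * (\<xi> \<bullet> b1)\<^sup>2 \<le> (norm \<xi>)\<^sup>2}"
  have Acl: "closed A" unfolding A_def by (intro closed_Collect_le continuous_intros)
  have Asets: "A \<in> sets lborel" "- A \<in> sets lborel" using Acl by (auto intro: borel_closed)
  define FA where "FA = (\<lambda>\<xi>. indicator A \<xi> *\<^sub>R Fz \<xi>)"
  define FB' where "FB' = (\<lambda>\<xi>. indicator (- A) \<xi> *\<^sub>R Fz \<xi>)"
  have FAi: "integrable lborel FA" unfolding FA_def by (rule integrable_mult_indicator[OF Asets(1) FB(5)])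
  have FBi: "integrable lborel FB'" unfolding FB'_def by (rule integrable_mult_indicator[OF Asets(2) FB(5)])
  have split: "integral UNIV Fz = integral UNIV FA + integral UNIV FB'"
  proof -
    have "Fz = (\<lambda>\<xi>. FA \<xi> + FB' \<xi>)" by (auto simp: FA_def FB'_def indicator_def fun_eq_iff)
    then show ?thesis using integral_add[OF integrable_on_lborel[OF FAi] integrable_on_lborel[OF FBi]] by simp
  qed
  have dim: "DIM(real^'n) = CARD('n)" by simp
  have boundA: "norm (integral UNIV FA) \<le> Cb * (2 * R) ^ (CARD('n) - 1)"
  proof -
    have "norm (integral UNIV FA) \<le> Cb * (2 * R) ^ (DIM(real^'n) - 1)"
    proof (rule fubini_bound[OF FAi b1 Cb0 R0])
      fix x :: "real^'n \<Rightarrow> real"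
      define \<eta> where "\<eta> = (\<Sum>c\<in>Basis-{b1}. x c *\<^sub>R c)"
      define \<rho> where "\<rho> = (norm \<eta>)\<^sup>2"
      have eqf: "(\<lambda>y. FA (\<eta> + y *\<^sub>R b1)) = (\<lambda>y. indicator {-sqrt \<rho>..sqrt \<rho>} y *\<^sub>R (exp (\<i> * of_real (\<eta> \<bullet> z)) * G \<rho> (b1 \<bullet> z) y))"
      proof
        fix y
        have ib: "(\<eta> + y *\<^sub>R b1) \<bullet> b1 = y" using line_inner[OF b1 b1, of x y] by (simp add: \<eta>_def)
        have n2: "(norm (\<eta> + y *\<^sub>R b1))\<^sup>2 = y\<^sup>2 + \<rho>" unfolding \<eta>_def \<rho>_def line_norm[OF b1] by simp
        have "(\<eta> + y *\<^sub>R b1 \<in> A) = (y\<^sup>2 \<le> \<rho>)" unfolding A_def using ib n2 by simp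
        also have "\<dots> = (\<bar>y\<bar> \<le> sqrt \<rho>)" using real_sqrt_le_iff[of "y\<^sup>2" \<rho>] by simp
        also have "\<dots> = (y \<in> {-sqrt \<rho>..sqrt \<rho>})" by auto
        finally have "indicator A (\<eta> + y *\<^sub>R b1) = (indicator {-sqrt \<rho>..sqrt \<rho>} y :: real)" by (simp add: indicator_def)
        then show "FA (\<eta> + y *\<^sub>R b1) = indicator {-sqrt \<rho>..sqrt \<rho>} y *\<^sub>R (exp (\<i> * of_real (\<eta> \<bullet> z)) * G \<rho> (b1 \<bullet> z) y)"
          unfolding FA_def using line[OF b1, of x y] by (simp add: \<eta>_def \<rho>_def)
      qed
      show "norm (\<integral>y. FA ((\<Sum>b'\<in>Basis-{b1}. x b' *\<^sub>R b') + y *\<^sub>R b1) \<partial>lborel) \<le> Cb"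
        unfolding \<eta>_def[symmetric] eqf by (rule LB[where D=\<rho>]) (auto simp: \<rho>_def)
    next
      fix x :: "real^'n \<Rightarrow> real" and b'
      assume "b' \<in> Basis - {b1}" "R < \<bar>x b'\<bar>"
      then have "(\<lambda>y. FA ((\<Sum>c\<in>Basis-{b1}. x c *\<^sub>R c) + y *\<^sub>R b1)) = (\<lambda>y. 0)"
        using outside[OF b1] by (auto simp: FA_def)
      then show "(\<integral>y. FA ((\<Sum>b'\<in>Basis-{b1}. x b' *\<^sub>R b') + y *\<^sub>R b1) \<partial>lborel) = 0" by simp
    qed
    then show ?thesis by (simp only: dim)
  qed
  have boundB: "norm (integral UNIV FB') \<le> Cb * (2 * R) ^ (CARD('n) - 1)"
  proof -
    have "norm (integral UNIV FB') \<le> Cb * (2 * R) ^ (DIM(real^'n) - 1)"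
    proof (rule fubini_bound[OF FBi b2 Cb0 R0])
      fix x :: "real^'n \<Rightarrow> real"
      define \<eta> where "\<eta> = (\<Sum>c\<in>Basis-{b2}. x c *\<^sub>R c)"
      define \<rho> where "\<rho> = (norm \<eta>)\<^sup>2"
      define D where "D = max 0 (2 * (x b1)\<^sup>2 - \<rho>)"
      have eb: "\<eta> \<bullet> b1 = x b1" using line_inner[OF b2 b1, of x 0] b12 by (simp add: \<eta>_def)
      have c1: "(x b1)\<^sup>2 \<le> \<rho>"
      proof -
        have "\<bar>x b1\<bar> \<le> norm \<eta>" using Basis_le_norm[OF b1, of \<eta>] eb by simp
        then have "\<bar>x b1\<bar>\<^sup>2 \<le> (norm \<eta>)\<^sup>2" by (rule power_mono) simp
        then show ?thesis by (simp add: \<rho>_def)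
      qed
      have eqf: "(\<lambda>y. FB' (\<eta> + y *\<^sub>R b2)) = (\<lambda>y. indicator {-sqrt D<..<sqrt D} y *\<^sub>R (exp (\<i> * of_real (\<eta> \<bullet> z)) * G \<rho> (b2 \<bullet> z) y))"
      proof
        fix y
        have ib: "(\<eta> + y *\<^sub>R b2) \<bullet> b1 = x b1" using line_inner[OF b2 b1, of x y] b12 by (simp add: \<eta>_def)
        have n2: "(norm (\<eta> + y *\<^sub>R b2))\<^sup>2 = y\<^sup>2 + \<rho>" unfolding \<eta>_def \<rho>_def line_norm[OF b2] by simp
        have "(\<eta> + y *\<^sub>R b2 \<in> - A) = (y\<^sup>2 < 2 * (x b1)\<^sup>2 - \<rho>)" unfolding A_def using ib n2 by auto
        also have "\<dots> = (y\<^sup>2 < D)" unfolding D_def by (auto simp: max_def) (smt (verit) zero_le_power2)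
        also have "\<dots> = (\<bar>y\<bar> < sqrt D)" using real_sqrt_less_iff[of "y\<^sup>2" D] by simp
        also have "\<dots> = (y \<in> {-sqrt D<..<sqrt D})" by auto
        finally have "indicator (- A) (\<eta> + y *\<^sub>R b2) = (indicator {-sqrt D<..<sqrt D} y :: real)" by (simp add: indicator_def)
        then show "FB' (\<eta> + y *\<^sub>R b2) = indicator {-sqrt D<..<sqrt D} y *\<^sub>R (exp (\<i> * of_real (\<eta> \<bullet> z)) * G \<rho> (b2 \<bullet> z) y)"
          unfolding FB'_def using line[OF b2, of x y] by (simp add: \<eta>_def \<rho>_def)
      qed
      have DD: "0 \<le> D" "D \<le> \<rho>" using c1 by (auto simp: D_def \<rho>_def)
      show "norm (\<integral>y. FB' ((\<Sum>b'\<in>Basis-{b2}. x b' *\<^sub>R b') + y *\<^sub>R b2) \<partial>lborel) \<le> Cb"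
        unfolding \<eta>_def[symmetric] eqf by (rule LB[where D=D]) (use DD in \<open>auto simp: \<rho>_def\<close>)
    next
      fix x :: "real^'n \<Rightarrow> real" and b'
      assume "b' \<in> Basis - {b2}" "R < \<bar>x b'\<bar>"
      then have "(\<lambda>y. FB' ((\<Sum>c\<in>Basis-{b2}. x c *\<^sub>R c) + y *\<^sub>R b2)) = (\<lambda>y. 0)"
        using outside[OF b2] by (auto simp: FB'_def)
      then show "(\<integral>y. FB' ((\<Sum>b'\<in>Basis-{b2}. x b' *\<^sub>R b') + y *\<^sub>R b2) \<partial>lborel) = 0" by simp
    qed
    then show ?thesis by (simp only: dim)
  qed
  have "norm (integral UNIV Fz) \<le> norm (integral UNIV FA) + norm (integral UNIV FB')"
    unfolding split by (rule norm_triangle_ineq)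
  also have "\<dots> \<le> 2 * Cb * (2 * R) ^ (CARD('n) - 1)" using boundA boundB by linarith
  finally show ?thesis by (simp add: Cb_def R_def)
qed


theorem lemma5p1:
  fixes psi h0 :: real and \<theta> :: "real \<Rightarrow> real"
  assumes "CARD('n::finite) \<ge> 2"
    and "psi > 0" and "h0 > 0"
    and "smooth_real \<theta>"
    and "closure {x. \<theta> x \<noteq> 0} \<subseteq> {1/6..3}"
    and "\<forall>x\<in>{5/6..12/5}. \<theta> x = 1"
  shows "\<exists>C>0. \<forall>k::int. \<exists>eps0>0. \<forall>eps. 0 < eps \<and> eps < eps0 \<longrightarrow>
     (\<forall>t\<ge>0. \<forall>tau>0. \<forall>z::real ^ 'n.
        cmod (I1k psi h0 \<theta> eps k t tau z)
        \<le> eps * C * 2 powr ((real CARD('n) - 1) * real_of_int k)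
            * max 1 (2 powr (- real_of_int k)) * exp (- t / 2)
            * min (2 powr real_of_int k / (2 powr real_of_int k + 1)) (tau powr (- 1/2)))"
proof -
  note card = assms(1) and psi = assms(2) and h0 = assms(3)
  note TF = theta_facts[OF assms(4) assms(5)]
  obtain M where M0: "M \<ge> 0" and Mb: "\<And>x. \<bar>\<theta> x\<bar> \<le> M" using TF(5) by blast
  obtain M1 where M10: "M1 \<ge> 0" and M1b: "\<And>x. \<bar>deriv \<theta> x\<bar> \<le> M1" using TF(6) by blast
  have thc: "continuous_on UNIV \<theta>"
    using DERIV_isCont[OF TF(1)] by (intro continuous_at_imp_continuous_on) auto
  define N where "N = CARD('n)"
  have N1: "N \<ge> 1" using card by (simp add: N_def)
  define l where "l = min (psi / 6) (sqrt (psi * h0 / 2))"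
  define Cl where "Cl = 10 * sqrt (2 * sqrt (18 * psi\<^sup>2 + psi * h0)) / psi *
              ((M + 6 * M1 + 6 * M * psi / l) / l)"
  have l0: "l > 0" using psi h0 by (simp add: l_def)
  have Cl0: "Cl \<ge> 0" using psi h0 M0 M10 l0 by (simp add: Cl_def)
  define C where "C = max (M * 6 ^ N / l) (2 * Cl * 6 ^ (N - 1)) + 1"
  have C0: "C > 0"
  proof -
    have "0 \<le> M * 6 ^ N / l" using M0 l0 by simp
    then show ?thesis unfolding C_def by linarith
  qed
  have CT: "M * 6 ^ N / l \<le> C" and CD: "2 * Cl * 6 ^ (N - 1) \<le> C" by (auto simp: C_def)
  show ?thesis
  proof (rule exI[of _ C], intro conjI allI C0)
    fix k :: int
    show "\<exists>eps0>0. \<forall>eps. 0 < eps \<and> eps < eps0 \<longrightarrow>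
     (\<forall>t\<ge>0. \<forall>tau>0. \<forall>z::real ^ 'n.
        cmod (I1k psi h0 \<theta> eps k t tau z)
        \<le> eps * C * 2 powr ((real CARD('n) - 1) * real_of_int k)
            * max 1 (2 powr (- real_of_int k)) * exp (- t / 2)
            * min (2 powr real_of_int k / (2 powr real_of_int k + 1)) (tau powr (- 1/2)))"
    proof (rule exI[of _ "sqrt (2 * psi * h0)"], rule conjI)
      show "0 < sqrt (2 * psi * h0)" using psi h0 by simp
      show "\<forall>eps. 0 < eps \<and> eps < sqrt (2 * psi * h0) \<longrightarrow>
     (\<forall>t\<ge>0. \<forall>tau>0. \<forall>z::real ^ 'n.
        cmod (I1k psi h0 \<theta> eps k t tau z)
        \<le> eps * C * 2 powr ((real CARD('n) - 1) * real_of_int k)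
            * max 1 (2 powr (- real_of_int k)) * exp (- t / 2)
            * min (2 powr real_of_int k / (2 powr real_of_int k + 1)) (tau powr (- 1/2)))"
      proof (intro allI impI)
      fix eps t tau :: real and z :: "real^'n"
      assume epsr: "0 < eps \<and> eps < sqrt (2 * psi * h0)" and t: "0 \<le> t" and tau: "0 < tau"
      have eps0: "eps > 0" using epsr by simp
      have eps: "eps\<^sup>2 \<le> 2 * psi * h0"
      proof -
        have "eps\<^sup>2 \<le> (sqrt (2 * psi * h0))\<^sup>2" using epsr by (intro power_mono) auto
        then show ?thesis using psi h0 by simp
      qed
      define P where "P = (2::real) powr real_of_int k"
      define q where "q = (2::real) powr (- real_of_int k)"
      have P0: "P > 0" by (simp add: P_def)
      have q0: "q > 0" by (simp add: q_def)
      have qP: "1 / q = P" by (simp add: P_def q_def powr_minus_divide)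
      define Fz where "Fz = (\<lambda>\<xi>::real^'n. exp (\<i> * of_real (\<xi> \<bullet> z)) * of_real (\<theta> (q * norm \<xi>))
                 * exp (\<i> * of_real (tau * lam psi h0 eps \<xi>)) / of_real (lam psi h0 eps \<xi>))"
      note FB = Fz_basic[OF psi h0 eps q0 thc TF(3) Fz_def]
      define c0 where "c0 = complex_of_real (exp (- t / 2)) * of_real eps / (2 * \<i>)"
      have I1: "I1k psi h0 \<theta> eps k t tau z = integral UNIV Fz * c0"
      proof -
        have "I1k psi h0 \<theta> eps k t tau z = integral UNIV (\<lambda>\<xi>. Fz \<xi> * c0)"
          unfolding I1k_def
        proof (rule arg_cong[where f="integral UNIV"], rule ext)
          fix \<xi> :: "real^'n"
          have ln: "complex_of_real (lam psi h0 eps \<xi>) \<noteq> 0" using FB(2)[of \<xi>] by simp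
          have d: "lam_plus psi h0 eps \<xi> - lam_minus psi h0 eps \<xi> = 2 * (\<i> / of_real eps) * of_real (lam psi h0 eps \<xi>)"
            by (simp add: lam_plus_def lam_minus_def)
          show "exp (\<i> * complex_of_real (\<xi> \<bullet> z)) * complex_of_real (\<theta> (2 powr - real_of_int k * norm \<xi>)) *
            (complex_of_real (exp (- t / 2)) * exp (\<i> * complex_of_real (tau * lam psi h0 eps \<xi>))) /
            (lam_plus psi h0 eps \<xi> - lam_minus psi h0 eps \<xi>) = Fz \<xi> * c0"
            unfolding d Fz_def c0_def q_def using ln eps0 by (simp add: field_simps)
        qed
        also have "\<dots> = integral UNIV Fz * c0" by (rule integral_mult_left)
        finally show ?thesis .
      qed
      have nc0: "cmod c0 = exp (- t / 2) * eps / 2" using eps0 by (simp add: c0_def norm_mult norm_divide)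
      define W where "W = P ^ (N - 1) * max 1 (1 / P)"
      have W0: "W > 0" using P0 by (simp add: W_def)
      have pw: "2 powr ((real CARD('n) - 1) * real_of_int k) = P ^ (N - 1)"
        using N1 by (simp add: N_def P_def powr_powr[symmetric] powr_realpow[symmetric] of_nat_diff mult.commute)
      have mk: "(2::real) powr (- real_of_int k) = 1 / P" by (simp add: P_def powr_minus_divide)
      have mx: "max 1 (2 powr (- real_of_int k)) = max 1 (1 / P)" by (simp only: mk)
      have tp: "tau powr (- 1/2) = 1 / sqrt tau" using tau by (simp add: powr_minus_divide powr_half_sqrt)
      have h6: "2 * (3 / q) = 6 * P"
      proof -
        have "2 * (3 / q) = 6 * (1 / q)" by simp
        then show ?thesis by (simp only: qP)
      qed
      define mn where "mn = min (P / (P + 1)) (1 / sqrt tau)"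
      have T: "norm (integral UNIV Fz) \<le> M / (l * max 1 (1 / q)) * (2 * (3 / q)) ^ N"
        unfolding l_def N_def by (rule trivial_bound[OF psi h0 eps q0 thc Mb TF(3) Fz_def])
      have T2: "norm (integral UNIV Fz) \<le> 2 * C * W * (P / (P + 1))"
      proof -
        define X where "X = max 1 P"
        have X0: "X > 0" by (simp add: X_def)
        have "M / (l * max 1 (1 / q)) * (2 * (3 / q)) ^ N = (M * 6 ^ N / l) * (P ^ N / X)"
          unfolding h6 qP using l0 X0 by (simp add: X_def power_mult_distrib field_simps)
        also have "\<dots> \<le> C * (P ^ N / X)" using CT P0 X0 by (intro mult_right_mono) auto
        also have "\<dots> \<le> 2 * C * W * (P / (P + 1))"
        proof -
          have PN: "P ^ N = P ^ (N - 1) * P" using N1 by (metis Suc_diff_le diff_Suc_1 power_Suc2)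
          have a: "P + 1 \<le> 2 * X" by (simp add: X_def)
          have b: "1 \<le> max 1 (1 / P)" by simp
          have "1 / X \<le> 2 * max 1 (1 / P) / (P + 1)"
          proof -
            have "2 * X * 1 \<le> 2 * X * max 1 (1 / P)" using b X0 by (intro mult_left_mono) auto
            then have "P + 1 \<le> 2 * X * max 1 (1 / P)" using a by linarith
            then show ?thesis using X0 P0 by (simp add: field_simps)
          qed
          then have "C * P ^ N * (1 / X) \<le> C * P ^ N * (2 * max 1 (1 / P) / (P + 1))"
            using C0 P0 by (intro mult_left_mono) auto
          then show ?thesis unfolding W_def PN using P0 by (simp add: field_simps)
        qed
        finally show ?thesis using T by linarith
      qed
      have Dd: "norm (integral UNIV Fz) \<le> 2 * (Cl / sqrt tau) * (2 * (3 / q)) ^ (N - 1)"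
        unfolding Cl_def l_def N_def
        by (rule decay_bound[OF card psi h0 eps tau q0 TF(1) TF(2) Mb M1b TF(3) TF(4) Fz_def])
      have D2: "norm (integral UNIV Fz) \<le> 2 * C * W * (1 / sqrt tau)"
      proof -
        have "2 * (Cl / sqrt tau) * (2 * (3 / q)) ^ (N - 1) = (2 * Cl * 6 ^ (N - 1)) * P ^ (N - 1) * (1 / sqrt tau)"
          unfolding h6 by (simp add: power_mult_distrib field_simps)
        also have "\<dots> \<le> C * P ^ (N - 1) * (1 / sqrt tau)"
          using CD P0 tau by (intro mult_right_mono) auto
        also have "\<dots> \<le> 2 * C * W * (1 / sqrt tau)"
        proof -
          have "C * P ^ (N - 1) * 1 \<le> C * P ^ (N - 1) * (2 * max 1 (1 / P))"
            using C0 P0 by (intro mult_left_mono) auto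
          then have "C * P ^ (N - 1) \<le> 2 * C * W" by (simp add: W_def field_simps)
          then show ?thesis using tau by (intro mult_right_mono) auto
        qed
        finally show ?thesis using Dd by linarith
      qed
      have Bm: "norm (integral UNIV Fz) \<le> 2 * C * W * mn"
        using T2 D2 by (simp add: mn_def min_def)
      have "cmod (I1k psi h0 \<theta> eps k t tau z) = norm (integral UNIV Fz) * (exp (- t / 2) * eps / 2)"
        by (simp add: I1 norm_mult nc0)
      also have "\<dots> \<le> (2 * C * W * mn) * (exp (- t / 2) * eps / 2)"
        using Bm eps0 by (intro mult_right_mono) auto
      also have "\<dots> = eps * C * P ^ (N - 1) * max 1 (1 / P) * exp (- t / 2) * mn"
        by (simp add: W_def)
      finally show "cmod (I1k psi h0 \<theta> eps k t tau z)
        \<le> eps * C * 2 powr ((real CARD('n) - 1) * real_of_int k)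
            * max 1 (2 powr (- real_of_int k)) * exp (- t / 2)
            * min (2 powr real_of_int k / (2 powr real_of_int k + 1)) (tau powr (- 1/2))"
        unfolding pw mx tp by (simp add: mn_def P_def)
    qed
    qed
  qed
qed


end
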